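(* With $Z_L(t)=\partial z_L(t)/\partial L$, we have $\lim_{L\to\infty}Z_L(L)=-1$ and $\lim_{L\to\infty}Z_L(L/2)=1/2$.
   Context: For $\alpha\in(0,1/\sqrt2)$ let $L_\alpha=\pi/\mathrm{AGM}(\alpha,\tfrac12\sqrt{1+2\alpha^2})$; $\alpha\mapsto L_\alpha$ is a decreasing bijection from $(0,1/\sqrt2)$ onto $(\pi\sqrt2,\infty)$. For $L>\pi\sqrt2$ let $\alpha$ satisfy $L_\alpha=L$ and let $x_0>y_0>0$ satisfy $x_0^2+y_0^2=1$, $x_0y_0=\alpha^2$. Let $(x_L,y_L,z_L)(t)$ solve $x'=-xz$, $y'=yz$, $z'=x^2-y^2$ ($'=d/dt$) with initial value $(x_0,y_0,0)$. *)

theory Defs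
  imports "HOL-Analysis.Analysis"
begin

fun agm_seq :: "real \<Rightarrow> real \<Rightarrow> nat \<Rightarrow> real \<times> real" where
  "agm_seq a b 0 = (a, b)"
| "agm_seq a b (Suc n) =
     (let (p, q) = agm_seq a b n in ((p + q) / 2, sqrt (p * q)))"

definition AGM :: "real \<Rightarrow> real \<Rightarrow> real" where
  "AGM a b = lim (\<lambda>n. fst (agm_seq a b n))"

definition L_alpha :: "real \<Rightarrow> real" where
  "L_alpha \<alpha> = pi / AGM \<alpha> (sqrt (1 + 2 * \<alpha>\<^sup>2) / 2)"

text \<open>For L > pi*sqrt 2, the unique alpha in (0, 1/sqrt 2) with L_alpha alpha = L.\<close>
definition alpha_of :: "real \<Rightarrow> real" where
  "alpha_of L = (THE \<alpha>. 0 < \<alpha> \<and> \<alpha> < 1 / sqrt 2 \<and> L_alpha \<alpha> = L)"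

definition init_xy :: "real \<Rightarrow> real \<times> real" where
  "init_xy L = (THE p. fst p > snd p \<and> snd p > 0 \<and> (fst p)\<^sup>2 + (snd p)\<^sup>2 = 1
                     \<and> fst p * snd p = (alpha_of L)\<^sup>2)"

definition vf :: "real \<times> real \<times> real \<Rightarrow> real \<times> real \<times> real" where
  "vf p = (case p of (x, y, z) \<Rightarrow> (- x * z, y * z, x\<^sup>2 - y\<^sup>2))"

definition sol :: "real \<Rightarrow> real \<Rightarrow> real \<times> real \<times> real" where
  "sol L = (THE f. f 0 = (fst (init_xy L), snd (init_xy L), 0)
                 \<and> (\<forall>t. (f has_vector_derivative vf (f t)) (at t)))"

definition zL :: "real \<Rightarrow> real \<Rightarrow> real" where
  "zL L t = snd (snd (sol L t))"

end

theory Submission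
  imports Defs
begin

lemma agm_seq_Suc':
  "agm_seq a b (Suc n) = ((fst (agm_seq a b n) + snd (agm_seq a b n)) / 2,
      sqrt (fst (agm_seq a b n) * snd (agm_seq a b n)))"
  by (simp add: case_prod_beta Let_def)

declare agm_seq.simps(2)[simp del]

lemma agm_pos:
  assumes "a > 0" "b > 0"
  shows "fst (agm_seq a b n) > 0 \<and> snd (agm_seq a b n) > 0"
  using assms by (induction n) (auto simp: agm_seq_Suc')

lemma agm_ord:
  assumes "a > 0" "b > 0"
  shows "snd (agm_seq a b (Suc n)) \<le> fst (agm_seq a b (Suc n))"
  using agm_pos[OF assms, of n] arith_geo_mean_sqrt[of "fst (agm_seq a b n)" "snd (agm_seq a b n)"]
  by (simp add: agm_seq_Suc')

lemma agm_conv: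
  assumes "a > 0" "b > 0"
  obtains M where "M > 0" "(\<lambda>n. fst (agm_seq a b n)) \<longlonglongrightarrow> M"
    "(\<lambda>n. snd (agm_seq a b n)) \<longlonglongrightarrow> M" "AGM a b = M"
proof -
  define A where "A n = fst (agm_seq a b (Suc n))" for n
  define B where "B n = snd (agm_seq a b (Suc n))" for n
  have pos: "A n > 0" "B n > 0" for n using agm_pos[OF assms] A_def B_def by auto
  have ord: "B n \<le> A n" for n using agm_ord[OF assms] A_def B_def by auto
  have Astep: "A (Suc n) = (A n + B n) / 2" for n
    unfolding A_def B_def by (simp only: agm_seq_Suc'[of a b "Suc n"]) simp
  have Bstep: "B (Suc n) = sqrt (A n * B n)" for n
    unfolding A_def B_def by (simp only: agm_seq_Suc'[of a b "Suc n"]) simp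
  have "decseq A"
    by (rule decseq_SucI) (use ord in \<open>simp add: Astep\<close>)
  have "incseq B"
  proof (rule incseq_SucI)
    fix n
    have "sqrt (B n * B n) \<le> sqrt (A n * B n)"
      using ord[of n] pos[of n] by (intro real_sqrt_le_mono mult_right_mono) auto
    then show "B n \<le> B (Suc n)" using pos[of n] by (simp add: Bstep)
  qed
  have lb: "B 0 \<le> A n" for n using \<open>incseq B\<close> ord[of n] by (meson incseq_def order_trans zero_le)
  obtain M where MA: "A \<longlonglongrightarrow> M" and "\<forall>i. M \<le> A i"
    using decseq_convergent[OF \<open>decseq A\<close>, of "B 0"] lb by blast
  have "B 0 \<le> M" using MA lb by (intro LIMSEQ_le_const) auto
  then have "M > 0" using pos[of 0] by linarith
  have "(\<lambda>n. 2 * A (Suc n) - A n) \<longlonglongrightarrow> 2 * M - M"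
    by (intro tendsto_intros MA[THEN LIMSEQ_Suc] MA)
  moreover have "(\<lambda>n. 2 * A (Suc n) - A n) = B" by (auto simp: Astep field_simps)
  ultimately have MB: "B \<longlonglongrightarrow> M" by simp
  have f1: "(\<lambda>n. fst (agm_seq a b n)) \<longlonglongrightarrow> M"
    using MA unfolding A_def by (rule LIMSEQ_imp_Suc)
  have f2: "(\<lambda>n. snd (agm_seq a b n)) \<longlonglongrightarrow> M"
    using MB unfolding B_def by (rule LIMSEQ_imp_Suc)
  have "AGM a b = M" unfolding AGM_def using f1 by (rule limI)
  show ?thesis by (rule that) fact+
qed

definition fI :: "real \<Rightarrow> real \<Rightarrow> real \<Rightarrow> real" where
  "fI a b t = 1 / sqrt (a\<^sup>2 * (cos t)\<^sup>2 + b\<^sup>2 * (sin t)\<^sup>2)"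

lemma qform_bounds:
  fixes a b t :: real
  assumes "a > 0" "b > 0"
  shows "(min a b)\<^sup>2 \<le> a\<^sup>2 * (cos t)\<^sup>2 + b\<^sup>2 * (sin t)\<^sup>2"
    and "a\<^sup>2 * (cos t)\<^sup>2 + b\<^sup>2 * (sin t)\<^sup>2 \<le> (max a b)\<^sup>2"
proof -
  have m1: "(min a b)\<^sup>2 \<le> a\<^sup>2" "(min a b)\<^sup>2 \<le> b\<^sup>2"
    using assms by (auto simp: min_def intro!: power_mono)
  have m2: "a\<^sup>2 \<le> (max a b)\<^sup>2" "b\<^sup>2 \<le> (max a b)\<^sup>2"
    using assms by (auto simp: max_def intro!: power_mono)
  have sc: "(cos t)\<^sup>2 + (sin t)\<^sup>2 = 1" by simp
  have "(min a b)\<^sup>2 = (min a b)\<^sup>2 * (cos t)\<^sup>2 + (min a b)\<^sup>2 * (sin t)\<^sup>2"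
    using sc by (metis distrib_left mult.right_neutral)
  also have "\<dots> \<le> a\<^sup>2 * (cos t)\<^sup>2 + b\<^sup>2 * (sin t)\<^sup>2"
    using m1 by (intro add_mono mult_right_mono) auto
  finally show "(min a b)\<^sup>2 \<le> a\<^sup>2 * (cos t)\<^sup>2 + b\<^sup>2 * (sin t)\<^sup>2" .
  have "a\<^sup>2 * (cos t)\<^sup>2 + b\<^sup>2 * (sin t)\<^sup>2 \<le> (max a b)\<^sup>2 * (cos t)\<^sup>2 + (max a b)\<^sup>2 * (sin t)\<^sup>2"
    using m2 by (intro add_mono mult_right_mono) auto
  also have "\<dots> = (max a b)\<^sup>2"
    using sc by (metis distrib_left mult.right_neutral)
  finally show "a\<^sup>2 * (cos t)\<^sup>2 + b\<^sup>2 * (sin t)\<^sup>2 \<le> (max a b)\<^sup>2" .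
qed

lemma qform_pos:
  fixes a b t :: real
  assumes "a > 0" "b > 0"
  shows "a\<^sup>2 * (cos t)\<^sup>2 + b\<^sup>2 * (sin t)\<^sup>2 > 0"
proof -
  have "(min a b)\<^sup>2 > 0" using assms by (simp add: min_def)
  then show ?thesis using qform_bounds(1)[OF assms, of t] by linarith
qed

lemma fI_bounds:
  fixes a b t :: real
  assumes "a > 0" "b > 0"
  shows "1 / max a b \<le> fI a b t" "fI a b t \<le> 1 / min a b" "fI a b t > 0"
proof -
  let ?q = "a\<^sup>2 * (cos t)\<^sup>2 + b\<^sup>2 * (sin t)\<^sup>2"
  have q: "?q > 0" by (rule qform_pos[OF assms])
  have "min a b > 0" "max a b > 0" using assms by auto
  have s1: "min a b \<le> sqrt ?q"
    using real_sqrt_le_mono[OF qform_bounds(1)[OF assms, of t]] \<open>min a b > 0\<close> by simp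
  have s2: "sqrt ?q \<le> max a b"
    using real_sqrt_le_mono[OF qform_bounds(2)[OF assms, of t]] \<open>max a b > 0\<close> by simp
  show "1 / max a b \<le> fI a b t" unfolding fI_def
    using s2 q \<open>max a b > 0\<close> by (intro divide_left_mono) auto
  show "fI a b t \<le> 1 / min a b" unfolding fI_def
    using s1 \<open>min a b > 0\<close> q by (intro divide_left_mono) auto
  show "fI a b t > 0" unfolding fI_def using q by simp
qed

lemma isCont_fI:
  assumes "a > 0" "b > 0"
  shows "isCont (fI a b) x"
proof -
  have "sqrt (a\<^sup>2 * (cos x)\<^sup>2 + b\<^sup>2 * (sin x)\<^sup>2) \<noteq> 0" using qform_pos[OF assms, of x] by simp
  then show ?thesis unfolding fI_def by (intro continuous_intros) auto
qed

definition FI :: "real \<Rightarrow> real \<Rightarrow> real \<Rightarrow> real" where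
  "FI a b = (SOME F. F 0 = 0 \<and> (\<forall>x. (F has_real_derivative fI a b x) (at x)))"

lemma FI_ex:
  assumes "a > 0" "b > 0"
  shows "\<exists>F. F 0 = 0 \<and> (\<forall>x. (F has_real_derivative fI a b x) (at x))"
proof -
  obtain F where F: "\<forall>x::real. (-\<infinity>::ereal) < x \<longrightarrow> x < \<infinity> \<longrightarrow>
       (F has_vector_derivative fI a b x) (at x)"
    using einterval_antiderivative[of "-\<infinity>" "\<infinity>" "fI a b"] isCont_fI[OF assms] by auto
  have "((\<lambda>x. F x - F 0) has_real_derivative fI a b x) (at x)" for x
    using F by (auto simp: has_real_derivative_iff_has_vector_derivative intro!: derivative_eq_intros)
  then show ?thesis by (intro exI[of _ "\<lambda>x. F x - F 0"]) auto
qed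

lemma FI_props:
  assumes "a > 0" "b > 0"
  shows "FI a b 0 = 0" "\<And>x. (FI a b has_real_derivative fI a b x) (at x)"
  using someI_ex[OF FI_ex[OF assms]] unfolding FI_def[symmetric] by auto

lemma deriv_unique:
  fixes F G f :: "real \<Rightarrow> real"
  assumes "\<And>x. (F has_real_derivative f x) (at x)" "\<And>x. (G has_real_derivative f x) (at x)"
    and "F c = G c"
  shows "F x = G x"
proof -
  have "\<forall>x. ((\<lambda>x. F x - G x) has_real_derivative 0) (at x)"
    using assms(1,2) by (metis DERIV_diff diff_self)
  from DERIV_isconst_all[OF this, of x c] assms(3) show ?thesis by simp
qed

lemma mvt0:
  fixes F f :: "real \<Rightarrow> real"
  assumes "\<And>x. (F has_real_derivative f x) (at x)"
  shows "\<exists>\<xi>. F x - F 0 = x * f \<xi> \<and> \<bar>\<xi>\<bar> \<le> \<bar>x\<bar>"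
proof (cases x "0::real" rule: linorder_cases)
  case less
  obtain z where "x < z" "z < 0" "F 0 - F x = (0 - x) * f z"
    using MVT2[OF less, of F f] assms by blast
  then show ?thesis by (intro exI[of _ z]) (auto simp: algebra_simps)
next
  case equal
  then show ?thesis by auto
next
  case greater
  obtain z where "0 < z" "z < x" "F x - F 0 = (x - 0) * f z"
    using MVT2[OF greater, of F f] assms by blast
  then show ?thesis by (intro exI[of _ z]) auto
qed

lemma FI_chain:
  assumes "a > 0" "b > 0" "(g has_real_derivative g') (at x)"
  shows "((\<lambda>x. FI a b (g x)) has_real_derivative fI a b (g x) * g') (at x)"
  using DERIV_chain2[OF FI_props(2)[OF assms(1,2)] assms(3)] .

lemma FI_shift:
  assumes "a > 0" "b > 0"
  shows "FI a b (x + pi) = FI a b x + FI a b pi"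
proof (rule deriv_unique[where c=0 and f="fI a b" and F="\<lambda>x. FI a b (x + pi)" and G="\<lambda>x. FI a b x + FI a b pi"])
  fix x
  have "((\<lambda>x. x + pi) has_real_derivative 1) (at x)" by (auto intro!: derivative_eq_intros)
  from FI_chain[OF assms this]
  show "((\<lambda>x. FI a b (x + pi)) has_real_derivative fI a b x) (at x)"
    by (simp add: fI_def)
  show "((\<lambda>x. FI a b x + FI a b pi) has_real_derivative fI a b x) (at x)"
    using FI_props[OF assms] by (auto intro!: derivative_eq_intros)
qed (simp add: FI_props[OF assms])

lemma FI_refl:
  assumes "a > 0" "b > 0"
  shows "FI a b (pi - x) = FI a b pi - FI a b x"
proof (rule deriv_unique[where c=0 and f="\<lambda>x. - fI a b x" and F="\<lambda>x. FI a b (pi - x)" and G="\<lambda>x. FI a b pi - FI a b x"])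
  fix x
  have "((\<lambda>x. pi - x) has_real_derivative -1) (at x)" by (auto intro!: derivative_eq_intros)
  from FI_chain[OF assms this]
  show "((\<lambda>x. FI a b (pi - x)) has_real_derivative - fI a b x) (at x)"
    by (simp add: fI_def)
  show "((\<lambda>x. FI a b pi - FI a b x) has_real_derivative - fI a b x) (at x)"
    using FI_props[OF assms] by (auto intro!: derivative_eq_intros)
qed (simp add: FI_props[OF assms])

lemma FI_half:
  assumes "a > 0" "b > 0"
  shows "FI a b pi = 2 * FI a b (pi / 2)"
  using FI_refl[OF assms, of "pi/2"] by simp

lemma FI_swap:
  assumes "a > 0" "b > 0"
  shows "FI b a x = FI a b (pi / 2) - FI a b (pi / 2 - x)"
proof (rule deriv_unique[where c=0 and f="fI b a" and F="FI b a" and G="\<lambda>x. FI a b (pi / 2) - FI a b (pi / 2 - x)"])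
  fix x
  show "(FI b a has_real_derivative fI b a x) (at x)"
    using FI_props(2)[OF assms(2,1)] .
  have e: "fI a b (pi / 2 - x) = fI b a x" by (simp add: fI_def cos_diff sin_diff add.commute)
  have "((\<lambda>x. pi/2 - x) has_real_derivative -1) (at x)" by (auto intro!: derivative_eq_intros)
  from FI_chain[OF assms this]
  show "((\<lambda>x. FI a b (pi / 2) - FI a b (pi / 2 - x)) has_real_derivative fI b a x) (at x)"
    using e by (auto intro!: derivative_eq_intros)
qed (simp add: FI_props[OF assms] FI_props[OF assms(2,1)])

lemma FI_swap_half:
  assumes "a > 0" "b > 0"
  shows "FI b a (pi / 2) = FI a b (pi / 2)"
  using FI_swap[OF assms, of "pi/2"] FI_props[OF assms] by simp

lemma FI_scale:
  assumes "a > 0" "b > 0" "l > 0"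
  shows "FI (l * a) (l * b) x = FI a b x / l"
proof (rule deriv_unique[where c=0 and f="fI (l * a) (l * b)" and F="FI (l * a) (l * b)" and G="\<lambda>x. FI a b x / l"])
  fix x
  have ca: "l * a > 0" "l * b > 0" using assms by auto
  show "(FI (l * a) (l * b) has_real_derivative fI (l * a) (l * b) x) (at x)"
    using FI_props(2)[OF ca] .
  have "(l * a)\<^sup>2 * (cos x)\<^sup>2 + (l * b)\<^sup>2 * (sin x)\<^sup>2 = l\<^sup>2 * (a\<^sup>2 * (cos x)\<^sup>2 + b\<^sup>2 * (sin x)\<^sup>2)"
    by (simp add: algebra_simps power_mult_distrib)
  then have "fI (l * a) (l * b) x = fI a b x / l"
    using assms by (simp add: fI_def real_sqrt_mult)
  then show "((\<lambda>x. FI a b x / l) has_real_derivative fI (l * a) (l * b) x) (at x)"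
    using FI_props(2)[OF assms(1,2)] assms(3) by (auto intro!: derivative_eq_intros)
qed (use assms in \<open>simp add: FI_props\<close>)

lemma landen_alg1:
  fixes C S k :: real
  assumes sc: "C * C + S * S = 1" and E: "0 < C * C + k * (S * S)" and k: "k > 0"
  shows "1 + inverse (1 + (k - 1) * S * C * ((k - 1) * S * C) /
       ((C * C + k * (S * S)) * (C * C + k * (S * S)))) *
     ((C * (k - 1) * C - S * ((k - 1) * S)) * (C * C + k * (S * S)) -
      (k - 1) * S * C * (2 * (C * S) * k - 2 * (C * S))) /
     ((C * C + k * (S * S)) * (C * C + k * (S * S))) =
     k / (C * C + k * k * (S * S))"
proof -
  define E where "E = C * C + k * (S * S)"
  define Q where "Q = C * C + k * k * (S * S)"
  define N where "N = (k - 1) * S * C"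
  define T where "T = (C * (k - 1) * C - S * ((k - 1) * S)) * (C * C + k * (S * S)) -
      (k - 1) * S * C * (2 * (C * S) * k - 2 * (C * S))"
  have h1: "E * E + N * N = Q" unfolding E_def N_def Q_def using sc by algebra
  have h2: "Q + T = k" unfolding T_def Q_def using sc by algebra
  have Qp: "Q > 0"
  proof -
    have "Q \<ge> E * E" using h1 by (metis le_add_same_cancel1 zero_le_square)
    moreover have "E * E > 0" using E unfolding E_def by simp
    ultimately show ?thesis by linarith
  qed
  have "1 + (N * N / (E * E)) = Q / (E * E)" using h1 E unfolding E_def[symmetric]
    by (simp add: field_simps)
  then have "inverse (1 + N * N / (E * E)) = E * E / Q" by simp
  then have "1 + inverse (1 + N * N / (E * E)) * T / (E * E) = (Q + T) / Q"
    using E Qp unfolding E_def[symmetric] by (simp add: field_simps)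
  also have "\<dots> = k / Q" using h2 by simp
  finally show ?thesis unfolding E_def Q_def N_def T_def by (simp add: mult.assoc)
qed

lemma gder:
  fixes k x :: real
  assumes "k > 0"
  shows "((\<lambda>x. x + arctan ((k - 1) * sin x * cos x / ((cos x)\<^sup>2 + k * (sin x)\<^sup>2)))
     has_real_derivative k / ((cos x)\<^sup>2 + k\<^sup>2 * (sin x)\<^sup>2)) (at x)"
proof -
  have E: "(cos x)\<^sup>2 + k * (sin x)\<^sup>2 > 0"
  proof (cases "k \<le> 1")
    case True
    have "k * (cos x)\<^sup>2 \<le> (cos x)\<^sup>2" using True assms by (intro mult_left_le_one_le) auto
    moreover have "k = k * (cos x)\<^sup>2 + k * (sin x)\<^sup>2"
      by (metis distrib_left mult.right_neutral sin_cos_squared_add2)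
    ultimately show ?thesis using assms by linarith
  next
    case False
    have "(sin x)\<^sup>2 \<le> k * (sin x)\<^sup>2" using False by (simp add: mult_le_cancel_right1)
    then show ?thesis using sin_cos_squared_add2[of x] by linarith
  qed
  show ?thesis
    using E landen_alg1[of "cos x" "sin x" k] assms
    by (auto intro!: derivative_eq_intros simp: power2_eq_square)
qed

lemma landen_alg2:
  fixes C S k a b u :: real
  assumes sc: "C * C + S * S = 1" and a: "a > 0" and b: "b > 0" and k: "k > 0" and kk: "k * k * b = a"
    and E: "0 < C * C + k * (S * S)" and u: "u = (k - 1) * S * C / (C * C + k * (S * S))"
  shows "(k / (C * C + k * k * (S * S)))\<^sup>2 /
     (a\<^sup>2 * ((C - S * u)\<^sup>2 / (1 + u\<^sup>2)) + b\<^sup>2 * ((S + C * u)\<^sup>2 / (1 + u\<^sup>2)))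
   = 1 / (a * b * (C * C - S * S)\<^sup>2 + ((a + b) / 2)\<^sup>2 * (2 * S * C)\<^sup>2)"
proof -
  define E where "E = C * C + k * (S * S)"
  define Q where "Q = C * C + k * k * (S * S)"
  have E0: "E > 0" using E E_def by simp
  have e1: "C - S * u = C / E"
  proof -
    have "C * E - S * ((k - 1) * S * C) = C" unfolding E_def using sc by algebra
    then show ?thesis using E0 unfolding u E_def[symmetric] by (simp add: field_simps)
  qed
  have e2: "S + C * u = k * S / E"
  proof -
    have "S * E + C * ((k - 1) * S * C) = k * S" unfolding E_def using sc by algebra
    then show ?thesis using E0 unfolding u E_def[symmetric] by (simp add: field_simps)
  qed
  have e3: "1 + u\<^sup>2 = Q / E\<^sup>2"
  proof -
    have "E * E + ((k - 1) * S * C) * ((k - 1) * S * C) = Q" unfolding E_def Q_def using sc by algebra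
    then show ?thesis using E0 unfolding u E_def[symmetric] by (simp add: field_simps power2_eq_square)
  qed
  have "Q = (1 + u\<^sup>2) * E\<^sup>2" using e3 E0 by (simp add: field_simps)
  moreover have "(1 + u\<^sup>2) * E\<^sup>2 > 0" using E0 by (intro mult_pos_pos) (auto intro: add_pos_nonneg)
  ultimately have Qp: "Q > 0" by simp
  have h1: "a\<^sup>2 * ((C - S * u)\<^sup>2 / (1 + u\<^sup>2)) + b\<^sup>2 * ((S + C * u)\<^sup>2 / (1 + u\<^sup>2))
      = (a\<^sup>2 * C\<^sup>2 + b\<^sup>2 * k\<^sup>2 * S\<^sup>2) / Q"
    unfolding e1 e2 e3 using E0 Qp by (simp add: field_simps power2_eq_square)
  have h2: "Q * (a\<^sup>2 * C\<^sup>2 + b\<^sup>2 * k\<^sup>2 * S\<^sup>2) =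
      k\<^sup>2 * (a * b * (C * C - S * S)\<^sup>2 + ((a + b) / 2)\<^sup>2 * (2 * S * C)\<^sup>2)"
    unfolding Q_def kk[symmetric] by (simp add: power2_eq_square algebra_simps)
  have h3: "a\<^sup>2 * C\<^sup>2 + b\<^sup>2 * k\<^sup>2 * S\<^sup>2 > 0"
  proof (rule ccontr)
    assume "\<not> ?thesis"
    moreover have "a\<^sup>2 * C\<^sup>2 \<ge> 0" "b\<^sup>2 * k\<^sup>2 * S\<^sup>2 \<ge> 0" by auto
    ultimately have "a\<^sup>2 * C\<^sup>2 = 0" "b\<^sup>2 * k\<^sup>2 * S\<^sup>2 = 0" by linarith+
    then have "C = 0" "S = 0" using a b k by auto
    then show False using sc by simp
  qed
  show ?thesis
  proof -
    define D where "D = a\<^sup>2 * C\<^sup>2 + b\<^sup>2 * k\<^sup>2 * S\<^sup>2"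
    define R where "R = a * b * (C * C - S * S)\<^sup>2 + ((a + b) / 2)\<^sup>2 * (2 * S * C)\<^sup>2"
    have "(k / Q)\<^sup>2 / (D / Q) = k\<^sup>2 / (Q * D)" using Qp by (simp add: field_simps power2_eq_square)
    also have "\<dots> = k\<^sup>2 / (k\<^sup>2 * R)" using h2 unfolding D_def R_def by simp
    also have "\<dots> = 1 / R" using k by simp
    finally show ?thesis using h1 unfolding D_def[symmetric] R_def[symmetric] Q_def by simp
  qed
qed

lemma landen:
  assumes a: "a > 0" and b: "b > 0"
  shows "FI a b (pi / 2) = FI ((a + b) / 2) (sqrt (a * b)) (pi / 2)"
proof -
  define k where "k = sqrt (a / b)"
  have k: "k > 0" "k * k * b = a" using a b unfolding k_def by (auto simp: real_sqrt_mult_self)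
  define a1 where "a1 = (a + b) / 2"
  define b1 where "b1 = sqrt (a * b)"
  have a1: "a1 > 0" and b1: "b1 > 0" using a b unfolding a1_def b1_def by auto
  define g where "g x = x + arctan ((k - 1) * sin x * cos x / ((cos x)\<^sup>2 + k * (sin x)\<^sup>2))" for x
  have key: "fI a b (g x) * (k / ((cos x)\<^sup>2 + k\<^sup>2 * (sin x)\<^sup>2)) = fI b1 a1 (2 * x)" for x
  proof -
    define C where "C = cos x"
    define S where "S = sin x"
    define u where "u = (k - 1) * S * C / (C * C + k * (S * S))"
    have sc: "C * C + S * S = 1" unfolding C_def S_def by (simp flip: power2_eq_square)
    have E: "0 < C * C + k * (S * S)"
    proof (rule ccontr)
      assume "\<not> ?thesis"
      moreover have "C * C \<ge> 0" "k * (S * S) \<ge> 0" using k by auto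
      ultimately have "C * C = 0" "k * (S * S) = 0" by linarith+
      then show False using sc k by simp
    qed
    have gx: "g x = x + arctan u" unfolding g_def u_def C_def S_def by (simp add: power2_eq_square)
    have u1: "0 \<le> 1 + u\<^sup>2" by (simp add: add_nonneg_nonneg)
    have "cos (g x) = (C - S * u) / sqrt (1 + u\<^sup>2)"
      unfolding gx cos_add cos_arctan sin_arctan C_def S_def by (simp add: diff_divide_distrib algebra_simps)
    then have cg: "(cos (g x))\<^sup>2 = (C - S * u)\<^sup>2 / (1 + u\<^sup>2)"
      using u1 by (simp add: power_divide)
    have "sin (g x) = (S + C * u) / sqrt (1 + u\<^sup>2)"
      unfolding gx sin_add cos_arctan sin_arctan C_def S_def by (simp add: add_divide_distrib algebra_simps)
    then have sg: "(sin (g x))\<^sup>2 = (S + C * u)\<^sup>2 / (1 + u\<^sup>2)"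
      using u1 by (simp add: power_divide)
    note alg = landen_alg2[OF sc a b k(1) k(2) E u_def]
    have q1: "a\<^sup>2 * (cos (g x))\<^sup>2 + b\<^sup>2 * (sin (g x))\<^sup>2 > 0" by (rule qform_pos[OF a b])
    have q2: "b1\<^sup>2 * (cos (2 * x))\<^sup>2 + a1\<^sup>2 * (sin (2 * x))\<^sup>2 > 0" by (rule qform_pos[OF b1 a1])
    have Qp: "(cos x)\<^sup>2 + k\<^sup>2 * (sin x)\<^sup>2 > 0"
    proof -
      have "(cos x)\<^sup>2 + k\<^sup>2 * (sin x)\<^sup>2 = 1\<^sup>2 * (cos x)\<^sup>2 + k\<^sup>2 * (sin x)\<^sup>2" by simp
      then show ?thesis using qform_pos[of 1 k x] k by simp
    qed
    have lhs_pos: "fI a b (g x) * (k / ((cos x)\<^sup>2 + k\<^sup>2 * (sin x)\<^sup>2)) > 0"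
      using fI_bounds(3)[OF a b] k Qp by simp
    have rhs_pos: "fI b1 a1 (2 * x) > 0" using fI_bounds(3)[OF b1 a1] by simp
    have "(fI a b (g x) * (k / ((cos x)\<^sup>2 + k\<^sup>2 * (sin x)\<^sup>2)))\<^sup>2 =
        (k / (C * C + k * k * (S * S)))\<^sup>2 / (a\<^sup>2 * (cos (g x))\<^sup>2 + b\<^sup>2 * (sin (g x))\<^sup>2)"
      unfolding fI_def C_def S_def using q1 by (simp add: power_mult_distrib power_divide power2_eq_square)
    also have "\<dots> = 1 / (a * b * (C * C - S * S)\<^sup>2 + ((a + b) / 2)\<^sup>2 * (2 * S * C)\<^sup>2)"
      unfolding cg sg by (rule alg)
    also have "\<dots> = (fI b1 a1 (2 * x))\<^sup>2"
    proof -
      have "(fI b1 a1 (2 * x))\<^sup>2 = 1 / (b1\<^sup>2 * (cos (2 * x))\<^sup>2 + a1\<^sup>2 * (sin (2 * x))\<^sup>2)"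
        unfolding fI_def using q2 by (simp add: power_divide)
      moreover have "b1\<^sup>2 * (cos (2 * x))\<^sup>2 + a1\<^sup>2 * (sin (2 * x))\<^sup>2 =
          a * b * (C * C - S * S)\<^sup>2 + ((a + b) / 2)\<^sup>2 * (2 * S * C)\<^sup>2"
        unfolding a1_def b1_def C_def S_def cos_double sin_double using a b
        by (simp add: power2_eq_square)
      ultimately show ?thesis by simp
    qed
    finally show ?thesis using lhs_pos rhs_pos by (simp add: power2_eq_iff_nonneg)
  qed
  have main: "FI a b (g x) = FI b1 a1 (2 * x) / 2" for x
  proof (rule deriv_unique[where c=0 and f="\<lambda>x. fI b1 a1 (2 * x)" and F="\<lambda>x. FI a b (g x)"
        and G="\<lambda>x. FI b1 a1 (2 * x) / 2"])
    fix x
    have "(g has_real_derivative k / ((cos x)\<^sup>2 + k\<^sup>2 * (sin x)\<^sup>2)) (at x)"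
      unfolding g_def by (rule gder[OF k(1)])
    from FI_chain[OF a b this] key[of x]
    show "((\<lambda>x. FI a b (g x)) has_real_derivative fI b1 a1 (2 * x)) (at x)" by simp
    have "((\<lambda>x. 2 * x) has_real_derivative 2) (at x)" by (auto intro!: derivative_eq_intros)
    from FI_chain[OF b1 a1 this]
    show "((\<lambda>x. FI b1 a1 (2 * x) / 2) has_real_derivative fI b1 a1 (2 * x)) (at x)"
      by (auto intro!: derivative_eq_intros)
  next
    show "FI a b (g 0) = FI b1 a1 (2 * 0) / 2" unfolding g_def
      using FI_props(1)[OF a b] FI_props(1)[OF b1 a1] by simp
  qed
  have gp: "g (pi / 2) = pi / 2" unfolding g_def by simp
  have "FI a b (pi / 2) = FI b1 a1 pi / 2" using main[of "pi/2"] unfolding gp by simp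
  also have "\<dots> = FI b1 a1 (pi / 2)" using FI_half[OF b1 a1] by simp
  also have "\<dots> = FI a1 b1 (pi / 2)" using FI_swap_half[OF a1 b1] by simp
  finally show ?thesis unfolding a1_def b1_def .
qed

lemma FI_agm_inv:
  assumes "a > 0" "b > 0"
  shows "FI a b (pi / 2) = FI (fst (agm_seq a b n)) (snd (agm_seq a b n)) (pi / 2)"
proof (induction n)
  case 0
  then show ?case by simp
next
  case (Suc n)
  have p: "fst (agm_seq a b n) > 0" "snd (agm_seq a b n) > 0" using agm_pos[OF assms] by auto
  show ?case using Suc landen[OF p] by (simp add: agm_seq_Suc')
qed

lemma FI_mvt:
  assumes "a > 0" "b > 0"
  shows "\<exists>\<xi>. FI a b x = x * fI a b \<xi> \<and> \<bar>\<xi>\<bar> \<le> \<bar>x\<bar>"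
  using mvt0[OF FI_props(2)[OF assms], of x] FI_props(1)[OF assms] by simp

lemma FI_half_bounds:
  assumes "a > 0" "b > 0"
  shows "(pi / 2) / max a b \<le> FI a b (pi / 2)" "FI a b (pi / 2) \<le> (pi / 2) / min a b"
proof -
  obtain \<xi> where xi: "FI a b (pi / 2) = (pi / 2) * fI a b \<xi>" using FI_mvt[OF assms] by blast
  show "(pi / 2) / max a b \<le> FI a b (pi / 2)" unfolding xi
    using fI_bounds(1)[OF assms, of \<xi>] by (simp add: divide_simps)
  show "FI a b (pi / 2) \<le> (pi / 2) / min a b" unfolding xi
    using fI_bounds(2)[OF assms, of \<xi>] assms by (simp add: divide_simps)
qed

lemma gauss:
  assumes "a > 0" "b > 0"
  shows "FI a b (pi / 2) = pi / (2 * AGM a b)"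
proof -
  obtain M where M: "M > 0" "(\<lambda>n. fst (agm_seq a b n)) \<longlonglongrightarrow> M"
    "(\<lambda>n. snd (agm_seq a b n)) \<longlonglongrightarrow> M" "AGM a b = M"
    using agm_conv[OF assms] by blast
  define A where "A n = fst (agm_seq a b n)" for n
  define B where "B n = snd (agm_seq a b n)" for n
  have pos: "A n > 0" "B n > 0" for n using agm_pos[OF assms] A_def B_def by auto
  have I: "FI a b (pi / 2) = FI (A n) (B n) (pi / 2)" for n
    unfolding A_def B_def by (rule FI_agm_inv[OF assms])
  have l1: "(\<lambda>n. (pi / 2) / max (A n) (B n)) \<longlonglongrightarrow> (pi / 2) / max M M"
    using M(2,3) M(1) unfolding A_def B_def by (intro tendsto_intros) auto
  have l2: "(\<lambda>n. (pi / 2) / min (A n) (B n)) \<longlonglongrightarrow> (pi / 2) / min M M"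
    using M(2,3) M(1) unfolding A_def B_def by (intro tendsto_intros) auto
  have "(pi / 2) / M \<le> FI a b (pi / 2)"
  proof -
    have "\<forall>n\<ge>0. (pi / 2) / max (A n) (B n) \<le> FI a b (pi / 2)"
      using FI_half_bounds(1)[OF pos] I by metis
    then show ?thesis using LIMSEQ_le_const2[OF l1, of "FI a b (pi / 2)"] by auto
  qed
  moreover have "FI a b (pi / 2) \<le> (pi / 2) / M"
  proof -
    have "\<forall>n\<ge>0. FI a b (pi / 2) \<le> (pi / 2) / min (A n) (B n)"
      using FI_half_bounds(2)[OF pos] I by metis
    then show ?thesis using LIMSEQ_le_const[OF l2, of "FI a b (pi / 2)"] by auto
  qed
  ultimately show ?thesis using M(4) by simp
qed

definition bb :: "real \<Rightarrow> real" where "bb \<alpha> = sqrt (1 + 2 * \<alpha>\<^sup>2)"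
definition aa :: "real \<Rightarrow> real" where "aa \<alpha> = sqrt (1 - 2 * \<alpha>\<^sup>2)"
definition Lfun :: "real \<Rightarrow> real" where "Lfun \<alpha> = 4 * FI (bb \<alpha>) (2 * \<alpha>) (pi / 2)"

lemma bb_ge1: "bb \<alpha> \<ge> 1" unfolding bb_def by simp

lemma bb_pos: "bb \<alpha> > 0" using bb_ge1[of \<alpha>] by linarith

lemma bb_sq: "(bb \<alpha>)\<^sup>2 = 1 + 2 * \<alpha>\<^sup>2" unfolding bb_def by (simp add: add_nonneg_nonneg)

lemma L_alpha_eq:
  assumes "\<alpha> > 0"
  shows "L_alpha \<alpha> = Lfun \<alpha>"
proof -
  have b2: "bb \<alpha> / 2 > 0" using bb_pos by simp
  have "FI \<alpha> (bb \<alpha> / 2) (pi / 2) = pi / (2 * AGM \<alpha> (bb \<alpha> / 2))"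
    by (rule gauss[OF assms b2])
  moreover have "FI \<alpha> (bb \<alpha> / 2) (pi / 2) > 0"
    using FI_half_bounds(1)[OF assms b2] assms bb_pos by (smt (verit) divide_pos_pos max_def pi_gt_zero)
  ultimately have "L_alpha \<alpha> = 2 * FI \<alpha> (bb \<alpha> / 2) (pi / 2)"
    unfolding L_alpha_def bb_def[symmetric] by (simp add: field_simps)
  also have "FI \<alpha> (bb \<alpha> / 2) (pi / 2) = FI ((1/2) * (2 * \<alpha>)) ((1/2) * bb \<alpha>) (pi / 2)" by simp
  also have "\<dots> = FI (2 * \<alpha>) (bb \<alpha>) (pi / 2) / (1/2)"
    using assms bb_pos by (intro FI_scale) auto
  also have "FI (2 * \<alpha>) (bb \<alpha>) (pi / 2) = FI (bb \<alpha>) (2 * \<alpha>) (pi / 2)"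
    using FI_swap_half[of "bb \<alpha>" "2 * \<alpha>"] assms bb_pos by simp
  finally show ?thesis unfolding Lfun_def by simp
qed

lemma Lfun_strict:
  assumes "0 < \<alpha>" "\<alpha> < \<beta>"
  shows "Lfun \<beta> < Lfun \<alpha>"
proof -
  have p: "2 * \<alpha> > 0" "2 * \<beta> > 0" using assms by auto
  define D where "D x = FI (bb \<alpha>) (2 * \<alpha>) x - FI (bb \<beta>) (2 * \<beta>) x" for x
  have "(D has_real_derivative fI (bb \<alpha>) (2 * \<alpha>) x - fI (bb \<beta>) (2 * \<beta>) x) (at x)" for x
    unfolding D_def using FI_props(2)[OF bb_pos p(1)] FI_props(2)[OF bb_pos p(2)]
    by (auto intro!: derivative_eq_intros)
  from mvt0[OF this, of "pi/2"] obtain \<xi> where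
    xi: "D (pi / 2) - D 0 = pi / 2 * (fI (bb \<alpha>) (2 * \<alpha>) \<xi> - fI (bb \<beta>) (2 * \<beta>) \<xi>)" by blast
  have D0: "D 0 = 0" unfolding D_def using FI_props(1)[OF bb_pos p(1)] FI_props(1)[OF bb_pos p(2)] by simp
  define q1 where "q1 = (bb \<alpha>)\<^sup>2 * (cos \<xi>)\<^sup>2 + (2 * \<alpha>)\<^sup>2 * (sin \<xi>)\<^sup>2"
  define q2 where "q2 = (bb \<beta>)\<^sup>2 * (cos \<xi>)\<^sup>2 + (2 * \<beta>)\<^sup>2 * (sin \<xi>)\<^sup>2"
  have q1p: "q1 > 0" unfolding q1_def by (rule qform_pos[OF bb_pos p(1)])
  have ab: "\<alpha>\<^sup>2 < \<beta>\<^sup>2" using assms by (simp add: power_strict_mono)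
  have eq: "q2 - q1 = 2 * (\<beta>\<^sup>2 - \<alpha>\<^sup>2) + 2 * (\<beta>\<^sup>2 - \<alpha>\<^sup>2) * (sin \<xi>)\<^sup>2"
    unfolding q1_def q2_def bb_sq cos_squared_eq by (simp add: algebra_simps power_mult_distrib)
  have nn: "2 * (\<beta>\<^sup>2 - \<alpha>\<^sup>2) * (sin \<xi>)\<^sup>2 \<ge> 0" using ab by simp
  have "2 * (\<beta>\<^sup>2 - \<alpha>\<^sup>2) > 0" using ab by simp
  then have "q2 - q1 > 0" unfolding eq using nn by (rule add_pos_nonneg)
  then have "q1 < q2" by simp
  then have "1 / sqrt q2 < 1 / sqrt q1" using q1p by (simp add: divide_strict_left_mono)
  then have "fI (bb \<beta>) (2 * \<beta>) \<xi> < fI (bb \<alpha>) (2 * \<alpha>) \<xi>" unfolding fI_def q1_def q2_def .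
  then have "pi / 2 * (fI (bb \<alpha>) (2 * \<alpha>) \<xi> - fI (bb \<beta>) (2 * \<beta>) \<xi>) > 0" by simp
  then have "D (pi / 2) > 0" using xi D0 by simp
  then show ?thesis unfolding D_def Lfun_def by simp
qed

lemma Lfun_upper:
  assumes "0 < \<alpha>" "\<alpha>\<^sup>2 \<le> 1 / 2"
  shows "Lfun \<alpha> \<le> pi / \<alpha>"
proof -
  have p: "2 * \<alpha> > 0" using assms by auto
  have "(2 * \<alpha>)\<^sup>2 \<le> (bb \<alpha>)\<^sup>2" unfolding bb_sq using assms(2) by (simp add: power_mult_distrib)
  then have "2 * \<alpha> \<le> bb \<alpha>" using bb_pos p by (meson less_le power2_le_imp_le)
  then have "min (bb \<alpha>) (2 * \<alpha>) = 2 * \<alpha>" by simp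
  then have "FI (bb \<alpha>) (2 * \<alpha>) (pi / 2) \<le> (pi / 2) / (2 * \<alpha>)"
    using FI_half_bounds(2)[OF bb_pos[of \<alpha>] p] by simp
  then show ?thesis unfolding Lfun_def using assms by (simp add: field_simps)
qed

lemma Lfun_lower:
  assumes "0 < \<alpha>" "\<alpha> < 1 / 2"
  shows "Lfun \<alpha> \<ge> - 2 * ln (2 * \<alpha>)"
proof -
  define b where "b = bb \<alpha>"
  define c where "c = 2 * \<alpha>"
  have b: "b > 0" "b \<ge> 1" unfolding b_def using bb_pos bb_ge1 by auto
  have c: "c > 0" "c < 1" unfolding c_def using assms by auto
  have b2: "b \<le> 2"
  proof -
    have "\<alpha> * \<alpha> \<le> 1 * 1" using assms by (intro mult_mono) auto
    then have "b\<^sup>2 \<le> 2\<^sup>2" unfolding b_def bb_sq using assms by (simp add: power2_eq_square)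
    then show ?thesis using b by (meson power2_le_imp_le zero_le_numeral)
  qed
  define G where "G \<theta> = - (1 / b) * ln (b * (pi / 2 - \<theta>) + c)" for \<theta>
  have "FI b c (pi / 2) - G (pi / 2) \<ge> FI b c 0 - G 0"
  proof (rule DERIV_nonneg_imp_nondecreasing[of 0 "pi/2" "\<lambda>\<theta>. FI b c \<theta> - G \<theta>"])
    fix \<theta> assume th: "0 \<le> \<theta>" "\<theta> \<le> pi / 2"
    have pos: "b * (pi / 2 - \<theta>) + c > 0" using th b c by (simp add: add_nonneg_pos)
    have dG: "(G has_real_derivative 1 / (b * (pi / 2 - \<theta>) + c)) (at \<theta>)"
    proof -
      have h: "((\<lambda>\<theta>. b * (pi / 2 - \<theta>) + c) has_real_derivative -b) (at \<theta>)"
        by (auto intro!: derivative_eq_intros)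
      have "((\<lambda>\<theta>. ln (b * (pi / 2 - \<theta>) + c)) has_real_derivative
          (1 / (b * (pi / 2 - \<theta>) + c)) * (-b)) (at \<theta>)"
        using DERIV_chain2[OF DERIV_ln_divide[OF pos] h] .
      from DERIV_cmult[OF this, of "- (1 / b)"]
      show ?thesis unfolding G_def using b by (simp add: field_simps)
    qed
    have cs: "cos \<theta> \<ge> 0" using th by (simp add: cos_ge_zero)
    have "cos \<theta> = sin (pi / 2 - \<theta>)" by (simp add: sin_cos_eq)
    also have "\<dots> \<le> pi / 2 - \<theta>" using th by (simp add: sin_x_le_x)
    finally have cl: "cos \<theta> \<le> pi / 2 - \<theta>" .
    have q: "b\<^sup>2 * (cos \<theta>)\<^sup>2 + c\<^sup>2 * (sin \<theta>)\<^sup>2 \<le> (b * cos \<theta> + c)\<^sup>2"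
    proof -
      have "(sin \<theta>)\<^sup>2 \<le> 1" by (simp add: abs_square_le_1)
      then have "c\<^sup>2 * (sin \<theta>)\<^sup>2 \<le> c\<^sup>2" using c by (simp add: mult_left_le)
      moreover have "0 \<le> 2 * (b * cos \<theta>) * c" using b c cs by simp
      ultimately show ?thesis unfolding power2_sum power_mult_distrib by linarith
    qed
    have "sqrt (b\<^sup>2 * (cos \<theta>)\<^sup>2 + c\<^sup>2 * (sin \<theta>)\<^sup>2) \<le> b * cos \<theta> + c"
      using real_sqrt_le_mono[OF q] b c cs by simp
    also have "\<dots> \<le> b * (pi / 2 - \<theta>) + c" using cl b by simp
    finally have "1 / (b * (pi / 2 - \<theta>) + c) \<le> fI b c \<theta>"
      unfolding fI_def using qform_pos[OF b(1) c(1), of \<theta>] pos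
      by (simp add: divide_simps)
    then show "\<exists>y. ((\<lambda>\<theta>. FI b c \<theta> - G \<theta>) has_real_derivative y) (at \<theta>) \<and> 0 \<le> y"
      using FI_props(2)[OF b(1) c(1), of \<theta>] dG by (intro exI conjI) (auto intro!: derivative_eq_intros)
  qed simp
  then have "FI b c (pi / 2) \<ge> G (pi / 2) - G 0" using FI_props(1)[OF b(1) c(1)] by simp
  also have "G (pi / 2) - G 0 = (1 / b) * (ln (b * (pi / 2) + c) - ln c)" unfolding G_def
    by (simp add: algebra_simps)
  finally have F1: "FI b c (pi / 2) \<ge> (1 / b) * (ln (b * (pi / 2) + c) - ln c)" .
  have "1 * 1 \<le> b * (pi / 2)" using b pi_ge_two by (intro mult_mono) auto
  then have "b * (pi / 2) + c \<ge> 1" using c by linarith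
  then have l1: "ln (b * (pi / 2) + c) \<ge> 0" by simp
  have l2: "- ln c > 0" using c by simp
  have "(1 / b) * (ln (b * (pi / 2) + c) - ln c) \<ge> (1 / b) * (- ln c)"
    using l1 b by (intro mult_left_mono) auto
  also have "(1 / b) * (- ln c) \<ge> (1 / 2) * (- ln c)"
    using b2 b l2 by (intro mult_right_mono) (auto simp: divide_simps)
  finally have "FI b c (pi / 2) \<ge> (1 / 2) * (- ln c)" using F1 by linarith
  then show ?thesis unfolding Lfun_def b_def[symmetric] c_def[symmetric] by simp
qed

lemma fI_lip:
  assumes m: "m > 0" and "a \<ge> m" "b \<ge> m" "a' \<ge> m" "b' \<ge> m"
  shows "\<bar>fI a b t - fI a' b' t\<bar> \<le> (\<bar>a\<^sup>2 - a'\<^sup>2\<bar> + \<bar>b\<^sup>2 - b'\<^sup>2\<bar>) / (2 * m ^ 3)"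
proof -
  have pos: "a > 0" "b > 0" "a' > 0" "b' > 0" using assms by auto
  define q where "q = a\<^sup>2 * (cos t)\<^sup>2 + b\<^sup>2 * (sin t)\<^sup>2"
  define q' where "q' = a'\<^sup>2 * (cos t)\<^sup>2 + b'\<^sup>2 * (sin t)\<^sup>2"
  have "m\<^sup>2 \<le> (min a b)\<^sup>2" using assms by (intro power_mono) auto
  then have qm: "m\<^sup>2 \<le> q" using qform_bounds(1)[OF pos(1,2), of t] unfolding q_def by linarith
  have "m\<^sup>2 \<le> (min a' b')\<^sup>2" using assms by (intro power_mono) auto
  then have qm': "m\<^sup>2 \<le> q'" using qform_bounds(1)[OF pos(3,4), of t] unfolding q'_def by linarith
  define s where "s = sqrt q"
  define s' where "s' = sqrt q'"
  have sm: "m \<le> s" unfolding s_def using real_sqrt_le_mono[OF qm] m by simp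
  have sm': "m \<le> s'" unfolding s'_def using real_sqrt_le_mono[OF qm'] m by simp
  have ss: "s\<^sup>2 = q" "s'\<^sup>2 = q'" unfolding s_def s'_def using qm qm' m
    by (auto intro!: real_sqrt_pow2 order_trans[OF zero_le_power2])
  have "fI a b t - fI a' b' t = (q' - q) / (s * s' * (s + s'))"
  proof -
    have "fI a b t - fI a' b' t = 1 / s - 1 / s'" unfolding fI_def s_def s'_def q_def q'_def by simp
    also have "\<dots> = (s' - s) / (s * s')" using sm sm' m by (simp add: field_simps)
    also have "\<dots> = ((s' - s) * (s' + s)) / ((s * s') * (s' + s))" using sm sm' m by simp
    also have "\<dots> = (s'\<^sup>2 - s\<^sup>2) / (s * s' * (s + s'))"
      by (simp add: power2_eq_square algebra_simps)
    finally show ?thesis unfolding ss .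
  qed
  then have "\<bar>fI a b t - fI a' b' t\<bar> = \<bar>q' - q\<bar> / (s * s' * (s + s'))"
    using sm sm' m by (simp add: abs_mult)
  also have "\<dots> \<le> \<bar>q' - q\<bar> / (m * m * (m + m))"
  proof (rule divide_left_mono)
    show "m * m * (m + m) \<le> s * s' * (s + s')"
      using sm sm' m by (intro mult_mono add_mono) auto
    show "0 < s * s' * (s + s') * (m * m * (m + m))" using sm sm' m by simp
  qed simp
  also have "\<dots> = \<bar>q' - q\<bar> / (2 * m ^ 3)" by (simp add: power3_eq_cube)
  also have "\<bar>q' - q\<bar> \<le> \<bar>a\<^sup>2 - a'\<^sup>2\<bar> + \<bar>b\<^sup>2 - b'\<^sup>2\<bar>"
  proof -
    have "q' - q = (a'\<^sup>2 - a\<^sup>2) * (cos t)\<^sup>2 + (b'\<^sup>2 - b\<^sup>2) * (sin t)\<^sup>2"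
      unfolding q_def q'_def by (simp add: algebra_simps)
    then have "\<bar>q' - q\<bar> \<le> \<bar>a'\<^sup>2 - a\<^sup>2\<bar> * (cos t)\<^sup>2 + \<bar>b'\<^sup>2 - b\<^sup>2\<bar> * (sin t)\<^sup>2"
      using abs_triangle_ineq[of "(a'\<^sup>2 - a\<^sup>2) * (cos t)\<^sup>2" "(b'\<^sup>2 - b\<^sup>2) * (sin t)\<^sup>2"]
      by (simp add: abs_mult)
    also have "\<dots> \<le> \<bar>a'\<^sup>2 - a\<^sup>2\<bar> * 1 + \<bar>b'\<^sup>2 - b\<^sup>2\<bar> * 1"
      by (intro add_mono mult_left_mono) (auto simp: abs_square_le_1)
    finally show ?thesis by (simp add: abs_minus_commute)
  qed
  then have "\<bar>q' - q\<bar> / (2 * m ^ 3) \<le> (\<bar>a\<^sup>2 - a'\<^sup>2\<bar> + \<bar>b\<^sup>2 - b'\<^sup>2\<bar>) / (2 * m ^ 3)"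
    using m by (intro divide_right_mono) auto
  finally show ?thesis .
qed

lemma FI_lip:
  assumes m: "m > 0" and "a \<ge> m" "b \<ge> m" "a' \<ge> m" "b' \<ge> m"
  shows "\<bar>FI a b x - FI a' b' x\<bar> \<le> \<bar>x\<bar> * ((\<bar>a\<^sup>2 - a'\<^sup>2\<bar> + \<bar>b\<^sup>2 - b'\<^sup>2\<bar>) / (2 * m ^ 3))"
proof -
  have pos: "a > 0" "b > 0" "a' > 0" "b' > 0" using assms by auto
  have "((\<lambda>x. FI a b x - FI a' b' x) has_real_derivative fI a b x - fI a' b' x) (at x)" for x
    using FI_props(2)[OF pos(1,2)] FI_props(2)[OF pos(3,4)] by (auto intro!: derivative_eq_intros)
  from mvt0[OF this, of x] obtain \<xi> where
    xi: "FI a b x - FI a' b' x - (FI a b 0 - FI a' b' 0) = x * (fI a b \<xi> - fI a' b' \<xi>)" by blast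
  then have "\<bar>FI a b x - FI a' b' x\<bar> = \<bar>x\<bar> * \<bar>fI a b \<xi> - fI a' b' \<xi>\<bar>"
    using FI_props(1)[OF pos(1,2)] FI_props(1)[OF pos(3,4)] by (simp add: abs_mult)
  also have "\<dots> \<le> \<bar>x\<bar> * ((\<bar>a\<^sup>2 - a'\<^sup>2\<bar> + \<bar>b\<^sup>2 - b'\<^sup>2\<bar>) / (2 * m ^ 3))"
    by (intro mult_left_mono fI_lip assms) auto
  finally show ?thesis .
qed

lemma isCont_Lfun:
  assumes "\<alpha>0 > 0"
  shows "isCont Lfun \<alpha>0"
proof -
  define m where "m = min 1 \<alpha>0"
  have m: "m > 0" "m \<le> 1" "m \<le> \<alpha>0" using assms unfolding m_def by auto
  define g where "g \<alpha> = 4 * ((pi / 2) * ((2 * \<bar>\<alpha>\<^sup>2 - \<alpha>0\<^sup>2\<bar> + 4 * \<bar>\<alpha>\<^sup>2 - \<alpha>0\<^sup>2\<bar>) / (2 * m ^ 3)))" for \<alpha>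
  have ev: "\<forall>\<^sub>F \<alpha> in at \<alpha>0. norm (Lfun \<alpha> - Lfun \<alpha>0) \<le> g \<alpha>"
  proof -
    have "\<forall>\<^sub>F \<alpha> in at \<alpha>0. \<alpha> > \<alpha>0 / 2"
      using assms by (intro order_tendstoD(1)[OF tendsto_ident_at]) auto
    then show ?thesis
    proof (rule eventually_mono)
      fix \<alpha> assume a: "\<alpha> > \<alpha>0 / 2"
      have m2: "m \<le> 2 * \<alpha>" "m \<le> 2 * \<alpha>0" "m \<le> bb \<alpha>" "m \<le> bb \<alpha>0"
        using a m bb_ge1[of \<alpha>] bb_ge1[of \<alpha>0] by auto
      have "\<bar>FI (bb \<alpha>) (2 * \<alpha>) (pi / 2) - FI (bb \<alpha>0) (2 * \<alpha>0) (pi / 2)\<bar>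
          \<le> \<bar>pi / 2\<bar> * ((\<bar>(bb \<alpha>)\<^sup>2 - (bb \<alpha>0)\<^sup>2\<bar> + \<bar>(2 * \<alpha>)\<^sup>2 - (2 * \<alpha>0)\<^sup>2\<bar>) / (2 * m ^ 3))"
        by (rule FI_lip[OF m(1)]) (use m2 in auto)
      also have "\<bar>(bb \<alpha>)\<^sup>2 - (bb \<alpha>0)\<^sup>2\<bar> = 2 * \<bar>\<alpha>\<^sup>2 - \<alpha>0\<^sup>2\<bar>"
      proof -
        have "(bb \<alpha>)\<^sup>2 - (bb \<alpha>0)\<^sup>2 = 2 * (\<alpha>\<^sup>2 - \<alpha>0\<^sup>2)" unfolding bb_sq by simp
        then show ?thesis by (simp only: abs_mult abs_numeral)
      qed
      also have "\<bar>(2 * \<alpha>)\<^sup>2 - (2 * \<alpha>0)\<^sup>2\<bar> = 4 * \<bar>\<alpha>\<^sup>2 - \<alpha>0\<^sup>2\<bar>"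
      proof -
        have "(2 * \<alpha>)\<^sup>2 - (2 * \<alpha>0)\<^sup>2 = 4 * (\<alpha>\<^sup>2 - \<alpha>0\<^sup>2)" by (simp add: power_mult_distrib)
        then show ?thesis by (simp only: abs_mult abs_numeral)
      qed
      finally show "norm (Lfun \<alpha> - Lfun \<alpha>0) \<le> g \<alpha>" unfolding Lfun_def g_def by simp
    qed
  qed
  have "(g \<longlongrightarrow> g \<alpha>0) (at \<alpha>0)" unfolding g_def using m by (intro tendsto_intros) auto
  then have "(g \<longlongrightarrow> 0) (at \<alpha>0)" unfolding g_def by simp
  from Lim_null_comparison[OF ev this] have "((\<lambda>\<alpha>. Lfun \<alpha> - Lfun \<alpha>0) \<longlongrightarrow> 0) (at \<alpha>0)" .
  then show ?thesis unfolding isCont_def by (simp add: LIM_zero_iff)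
qed

lemma Lfun_pos: "\<alpha> > 0 \<Longrightarrow> Lfun \<alpha> > 0"
proof -
  assume a: "\<alpha> > 0"
  have p: "2 * \<alpha> > 0" using a by simp
  have "0 < (pi / 2) / max (bb \<alpha>) (2 * \<alpha>)" using bb_pos[of \<alpha>] p by simp
  also have "\<dots> \<le> FI (bb \<alpha>) (2 * \<alpha>) (pi / 2)" by (rule FI_half_bounds(1)[OF bb_pos p])
  finally show ?thesis unfolding Lfun_def by simp
qed

lemma Lfun_mono: "0 < \<alpha> \<Longrightarrow> \<alpha> \<le> \<beta> \<Longrightarrow> Lfun \<beta> \<le> Lfun \<alpha>"
  using Lfun_strict[of \<alpha> \<beta>] by (cases "\<alpha> = \<beta>") auto

definition L0 :: real where "L0 = Lfun (1 / 2)"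

lemma half_lt_inv_sqrt2: "(1::real) / 2 < 1 / sqrt 2"
proof -
  have "sqrt 2 < (2::real)" by (simp add: real_less_lsqrt)
  then show ?thesis by (simp add: divide_strict_left_mono)
qed

lemma alpha_of_props:
  assumes L: "L > L0"
  shows "0 < alpha_of L" "alpha_of L < 1 / 2" "Lfun (alpha_of L) = L"
proof -
  have L0p: "L0 > 0" unfolding L0_def by (rule Lfun_pos) simp
  define \<alpha>0 where "\<alpha>0 = min (1 / 4) (exp (- L) / 2)"
  have a0: "\<alpha>0 > 0" "\<alpha>0 < 1 / 2" unfolding \<alpha>0_def by auto
  have "2 * \<alpha>0 \<le> exp (- L)" unfolding \<alpha>0_def by linarith
  then have "ln (2 * \<alpha>0) \<le> - L" using a0 by (metis ln_exp ln_le_cancel_iff mult_pos_pos exp_gt_zero zero_less_numeral)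
  then have "Lfun \<alpha>0 \<ge> 2 * L" using Lfun_lower[OF a0] by linarith
  then have hi: "L \<le> Lfun \<alpha>0" using L L0p by linarith
  have lo: "Lfun (1 / 2) \<le> L" using L unfolding L0_def by simp
  obtain \<alpha> where \<alpha>: "\<alpha>0 \<le> \<alpha>" "\<alpha> \<le> 1 / 2" "Lfun \<alpha> = L"
    using IVT2[of Lfun "1/2" L \<alpha>0, OF lo hi] a0 isCont_Lfun by auto
  have "\<alpha> \<noteq> 1 / 2"
  proof
    assume "\<alpha> = 1 / 2"
    then have "L = L0" using \<alpha>(3) unfolding L0_def by metis
    then show False using L by simp
  qed
  then have \<alpha>': "0 < \<alpha>" "\<alpha> < 1 / 2" using \<alpha> a0 by auto
  have uniq: "\<beta> = \<alpha>" if "0 < \<beta>" "\<beta> < 1 / sqrt 2" "L_alpha \<beta> = L" for \<beta>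
  proof -
    have "Lfun \<beta> = Lfun \<alpha>" using that L_alpha_eq[of \<beta>] \<alpha>(3) by simp
    then show ?thesis using Lfun_strict[of \<alpha> \<beta>] Lfun_strict[of \<beta> \<alpha>] \<alpha>'(1) that(1)
      by (cases \<alpha> \<beta> rule: linorder_cases) auto
  qed
  have "alpha_of L = \<alpha>" unfolding alpha_of_def
  proof (rule the_equality)
    show "0 < \<alpha> \<and> \<alpha> < 1 / sqrt 2 \<and> L_alpha \<alpha> = L"
      using \<alpha>' \<alpha>(3) L_alpha_eq[of \<alpha>] less_trans[OF \<alpha>'(2) half_lt_inv_sqrt2] by auto
  qed (use uniq in auto)
  then show "0 < alpha_of L" "alpha_of L < 1 / 2" "Lfun (alpha_of L) = L" using \<alpha>' \<alpha>(3) by auto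
qed

lemma alpha_of_le:
  assumes L: "L > L0"
  shows "alpha_of L \<le> pi / L"
proof -
  note p = alpha_of_props[OF L]
  have "(alpha_of L)\<^sup>2 \<le> 1 / 2"
  proof -
    have "alpha_of L * alpha_of L \<le> (1/2) * (1/2)" using p by (intro mult_mono) auto
    then show ?thesis by (simp add: power2_eq_square)
  qed
  from Lfun_upper[OF p(1) this] p(3) have "L \<le> pi / alpha_of L" by simp
  moreover have "L > 0" using L Lfun_pos[of "1/2"] unfolding L0_def by simp
  ultimately show ?thesis using p(1) by (simp add: field_simps)
qed

lemma alpha_of_tendsto: "(alpha_of \<longlongrightarrow> 0) at_top"
proof (rule tendsto_sandwich[of "\<lambda>_. 0" _ _ "\<lambda>L. pi / L"])
  have ev: "\<forall>\<^sub>F L in at_top. L > L0" by (rule eventually_gt_at_top)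
  show "\<forall>\<^sub>F L in at_top. 0 \<le> alpha_of L"
    using ev by eventually_elim (use alpha_of_props in \<open>auto intro: less_imp_le\<close>)
  show "\<forall>\<^sub>F L in at_top. alpha_of L \<le> pi / L"
    using ev by eventually_elim (rule alpha_of_le)
  show "((\<lambda>L. pi / L) \<longlongrightarrow> 0) at_top" by (intro tendsto_divide_0[OF tendsto_const] filterlim_at_top_imp_at_infinity filterlim_ident)
qed simp

lemma alpha_of_cont:
  assumes L: "L > L0"
  shows "(alpha_of \<longlongrightarrow> alpha_of L) (at L)"
  unfolding tendsto_iff
proof (intro allI impI)
  fix e :: real assume e: "e > 0"
  define \<alpha> where "\<alpha> = alpha_of L"
  note p = alpha_of_props[OF L, folded \<alpha>_def]
  define e' where "e' = min (e / 2) (\<alpha> / 2)"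
  have e': "e' > 0" "e' < e" "\<alpha> - e' > 0" using e p unfolding e'_def by auto
  have hi: "Lfun (\<alpha> - e') > L" using Lfun_strict[of "\<alpha> - e'" \<alpha>] e' p by simp
  have lo: "Lfun (\<alpha> + e') < L" using Lfun_strict[of \<alpha> "\<alpha> + e'"] e' p by simp
  have ev1: "\<forall>\<^sub>F L' in at L. L' < Lfun (\<alpha> - e')"
    using hi by (intro order_tendstoD(2)[OF tendsto_ident_at])
  have ev2: "\<forall>\<^sub>F L' in at L. max L0 (Lfun (\<alpha> + e')) < L'"
    using lo L by (intro order_tendstoD(1)[OF tendsto_ident_at]) auto
  show "\<forall>\<^sub>F L' in at L. dist (alpha_of L') (alpha_of L) < e"
    using ev1 ev2
  proof eventually_elim
    case (elim L')
    then have L': "L' > L0" by simp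
    note p' = alpha_of_props[OF L']
    have "alpha_of L' < \<alpha> + e'"
    proof (rule ccontr)
      assume "\<not> ?thesis"
      then have "Lfun (alpha_of L') \<le> Lfun (\<alpha> + e')" using Lfun_mono[of "\<alpha> + e'" "alpha_of L'"] p e' by simp
      then show False using elim p' by simp
    qed
    moreover have "alpha_of L' > \<alpha> - e'"
    proof (rule ccontr)
      assume "\<not> ?thesis"
      then have "Lfun (\<alpha> - e') \<le> Lfun (alpha_of L')" using Lfun_mono[of "alpha_of L'" "\<alpha> - e'"] p' by simp
      then show False using elim p' by simp
    qed
    ultimately show ?case using e' unfolding \<alpha>_def dist_real_def by auto
  qed
qed

lemma comp_deriv:
  fixes f :: "real \<Rightarrow> real \<times> real \<times> real"
  assumes "(f has_vector_derivative v) (at t)"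
  shows "((\<lambda>t. fst (f t)) has_real_derivative fst v) (at t)"
    "((\<lambda>t. fst (snd (f t))) has_real_derivative fst (snd v)) (at t)"
    "((\<lambda>t. snd (snd (f t))) has_real_derivative snd (snd v)) (at t)"
proof -
  have d: "(f has_derivative (\<lambda>h. h *\<^sub>R v)) (at t)" using assms unfolding has_vector_derivative_def .
  have "((\<lambda>t. fst (f t)) has_derivative (\<lambda>h. fst (h *\<^sub>R v))) (at t)" by (rule has_derivative_fst[OF d])
  moreover have "(\<lambda>h. fst (h *\<^sub>R v)) = (*) (fst v)" by (auto simp: fun_eq_iff)
  ultimately show "((\<lambda>t. fst (f t)) has_real_derivative fst v) (at t)"
    unfolding has_field_derivative_def by simp
  have d2: "((\<lambda>t. snd (f t)) has_derivative (\<lambda>h. snd (h *\<^sub>R v))) (at t)" by (rule has_derivative_snd[OF d])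
  have "((\<lambda>t. fst (snd (f t))) has_derivative (\<lambda>h. fst (snd (h *\<^sub>R v)))) (at t)" by (rule has_derivative_fst[OF d2])
  moreover have "(\<lambda>h. fst (snd (h *\<^sub>R v))) = (*) (fst (snd v))" by (auto simp: fun_eq_iff)
  ultimately show "((\<lambda>t. fst (snd (f t))) has_real_derivative fst (snd v)) (at t)"
    unfolding has_field_derivative_def by simp
  have "((\<lambda>t. snd (snd (f t))) has_derivative (\<lambda>h. snd (snd (h *\<^sub>R v)))) (at t)" by (rule has_derivative_snd[OF d2])
  moreover have "(\<lambda>h. snd (snd (h *\<^sub>R v))) = (*) (snd (snd v))" by (auto simp: fun_eq_iff)
  ultimately show "((\<lambda>t. snd (snd (f t))) has_real_derivative snd (snd v)) (at t)"
    unfolding has_field_derivative_def by simp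
qed

lemma sol_derivs:
  fixes f :: "real \<Rightarrow> real \<times> real \<times> real"
  assumes "\<And>t. (f has_vector_derivative vf (f t)) (at t)"
  shows "((\<lambda>t. fst (f t)) has_real_derivative - fst (f t) * snd (snd (f t))) (at t)"
    "((\<lambda>t. fst (snd (f t))) has_real_derivative fst (snd (f t)) * snd (snd (f t))) (at t)"
    "((\<lambda>t. snd (snd (f t))) has_real_derivative (fst (f t))\<^sup>2 - (fst (snd (f t)))\<^sup>2) (at t)"
  using comp_deriv[OF assms[of t]] by (simp_all add: vf_def case_prod_beta)

lemma sol_norm:
  fixes f :: "real \<Rightarrow> real \<times> real \<times> real"
  assumes "\<And>t. (f has_vector_derivative vf (f t)) (at t)"
  shows "(fst (f t))\<^sup>2 + (fst (snd (f t)))\<^sup>2 + (snd (snd (f t)))\<^sup>2 =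
         (fst (f 0))\<^sup>2 + (fst (snd (f 0)))\<^sup>2 + (snd (snd (f 0)))\<^sup>2"
proof -
  note d = sol_derivs[OF assms]
  have "\<forall>t. ((\<lambda>t. (fst (f t))\<^sup>2 + (fst (snd (f t)))\<^sup>2 + (snd (snd (f t)))\<^sup>2) has_real_derivative 0) (at t)"
  proof
    fix t
    show "((\<lambda>t. (fst (f t))\<^sup>2 + (fst (snd (f t)))\<^sup>2 + (snd (snd (f t)))\<^sup>2) has_real_derivative 0) (at t)"
      using d[of t] by (auto intro!: derivative_eq_intros simp: algebra_simps power2_eq_square)
  qed
  from DERIV_isconst_all[OF this] show ?thesis .
qed

lemma lip_bound:
  fixes x1 x2 y1 y2 z1 z2 :: real
  assumes "\<bar>x1\<bar> \<le> 1" "\<bar>y1\<bar> \<le> 1" "\<bar>z1\<bar> \<le> 1"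
  shows "\<bar>2 * ((x1 - x2) * (- x1 * z1 + x2 * z2) + (y1 - y2) * (y1 * z1 - y2 * z2)
          + (z1 - z2) * ((x1\<^sup>2 - y1\<^sup>2) - (x2\<^sup>2 - y2\<^sup>2)))\<bar>
         \<le> 3 * ((x1 - x2)\<^sup>2 + (y1 - y2)\<^sup>2 + (z1 - z2)\<^sup>2)"
proof -
  define dx where "dx = x1 - x2"
  define dy where "dy = y1 - y2"
  define dz where "dz = z1 - z2"
  have id: "(x1 - x2) * (- x1 * z1 + x2 * z2) + (y1 - y2) * (y1 * z1 - y2 * z2)
          + (z1 - z2) * ((x1\<^sup>2 - y1\<^sup>2) - (x2\<^sup>2 - y2\<^sup>2))
       = z1 * (dy\<^sup>2 - dx\<^sup>2) + x1 * (dx * dz) - y1 * (dy * dz)"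
    unfolding dx_def dy_def dz_def by (simp add: power2_eq_square algebra_simps)
  have t1: "\<bar>z1 * (dy\<^sup>2 - dx\<^sup>2)\<bar> \<le> dy\<^sup>2 + dx\<^sup>2"
  proof -
    have "\<bar>z1 * (dy\<^sup>2 - dx\<^sup>2)\<bar> = \<bar>z1\<bar> * \<bar>dy\<^sup>2 - dx\<^sup>2\<bar>" by (simp add: abs_mult)
    also have "\<dots> \<le> 1 * \<bar>dy\<^sup>2 - dx\<^sup>2\<bar>" using assms by (intro mult_right_mono) auto
    also have "\<dots> \<le> dy\<^sup>2 + dx\<^sup>2"
      using zero_le_power2[of dx] zero_le_power2[of dy] by (simp add: abs_le_iff)
    finally show ?thesis .
  qed
  have pq: "\<bar>p * q\<bar> \<le> (p\<^sup>2 + q\<^sup>2) / 2" for p q :: real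
  proof -
    have "0 \<le> (\<bar>p\<bar> - \<bar>q\<bar>)\<^sup>2" by simp
    then show ?thesis by (simp add: power2_eq_square algebra_simps abs_mult)
  qed
  have t2: "\<bar>x1 * (dx * dz)\<bar> \<le> (dx\<^sup>2 + dz\<^sup>2) / 2"
  proof -
    have "\<bar>x1 * (dx * dz)\<bar> = \<bar>x1\<bar> * \<bar>dx * dz\<bar>" by (simp add: abs_mult)
    also have "\<dots> \<le> 1 * \<bar>dx * dz\<bar>" using assms by (intro mult_right_mono) auto
    finally show ?thesis using pq[of dx dz] by simp
  qed
  have t3: "\<bar>y1 * (dy * dz)\<bar> \<le> (dy\<^sup>2 + dz\<^sup>2) / 2"
  proof -
    have "\<bar>y1 * (dy * dz)\<bar> = \<bar>y1\<bar> * \<bar>dy * dz\<bar>" by (simp add: abs_mult)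
    also have "\<dots> \<le> 1 * \<bar>dy * dz\<bar>" using assms by (intro mult_right_mono) auto
    finally show ?thesis using pq[of dy dz] by simp
  qed
  have "\<bar>z1 * (dy\<^sup>2 - dx\<^sup>2) + x1 * (dx * dz) - y1 * (dy * dz)\<bar>
      \<le> \<bar>z1 * (dy\<^sup>2 - dx\<^sup>2)\<bar> + \<bar>x1 * (dx * dz)\<bar> + \<bar>y1 * (dy * dz)\<bar>" by linarith
  also have "\<dots> \<le> (dy\<^sup>2 + dx\<^sup>2) + (dx\<^sup>2 + dz\<^sup>2) / 2 + (dy\<^sup>2 + dz\<^sup>2) / 2" using t1 t2 t3 by (intro add_mono)
  also have "\<dots> \<le> (3 / 2) * (dx\<^sup>2 + dy\<^sup>2 + dz\<^sup>2)" using zero_le_power2[of dz] by (simp add: field_simps)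
  finally have B: "\<bar>z1 * (dy\<^sup>2 - dx\<^sup>2) + x1 * (dx * dz) - y1 * (dy * dz)\<bar> \<le> (3 / 2) * (dx\<^sup>2 + dy\<^sup>2 + dz\<^sup>2)" .
  have "\<bar>2 * (z1 * (dy\<^sup>2 - dx\<^sup>2) + x1 * (dx * dz) - y1 * (dy * dz))\<bar> \<le> 3 * (dx\<^sup>2 + dy\<^sup>2 + dz\<^sup>2)"
    using B by (simp only: abs_mult) simp
  then show ?thesis unfolding id dx_def dy_def dz_def .
qed

lemma ode_unique:
  fixes f g :: "real \<Rightarrow> real \<times> real \<times> real"
  assumes f: "\<And>t. (f has_vector_derivative vf (f t)) (at t)"
    and g: "\<And>t. (g has_vector_derivative vf (g t)) (at t)"
    and fg0: "f 0 = g 0"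
    and n0: "(fst (f 0))\<^sup>2 + (fst (snd (f 0)))\<^sup>2 + (snd (snd (f 0)))\<^sup>2 = 1"
  shows "f t = g t"
proof -
  define x1 where "x1 t = fst (f t)" for t
  define y1 where "y1 t = fst (snd (f t))" for t
  define z1 where "z1 t = snd (snd (f t))" for t
  define x2 where "x2 t = fst (g t)" for t
  define y2 where "y2 t = fst (snd (g t))" for t
  define z2 where "z2 t = snd (snd (g t))" for t
  note df = sol_derivs[OF f, folded x1_def y1_def z1_def]
  note dg = sol_derivs[OF g, folded x2_def y2_def z2_def]
  have nf: "(x1 t)\<^sup>2 + (y1 t)\<^sup>2 + (z1 t)\<^sup>2 = 1" for t
    using sol_norm[OF f, of t] n0 unfolding x1_def y1_def z1_def by simp
  have bd: "\<bar>x1 t\<bar> \<le> 1" "\<bar>y1 t\<bar> \<le> 1" "\<bar>z1 t\<bar> \<le> 1" for t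
  proof -
    have "(x1 t)\<^sup>2 \<le> 1" "(y1 t)\<^sup>2 \<le> 1" "(z1 t)\<^sup>2 \<le> 1" using nf[of t]
      by (smt (verit) zero_le_power2)+
    then show "\<bar>x1 t\<bar> \<le> 1" "\<bar>y1 t\<bar> \<le> 1" "\<bar>z1 t\<bar> \<le> 1" by (simp_all add: abs_square_le_1)
  qed
  define u where "u t = (x1 t - x2 t)\<^sup>2 + (y1 t - y2 t)\<^sup>2 + (z1 t - z2 t)\<^sup>2" for t
  define u' where "u' t = 2 * ((x1 t - x2 t) * (- x1 t * z1 t + x2 t * z2 t) + (y1 t - y2 t) * (y1 t * z1 t - y2 t * z2 t)
          + (z1 t - z2 t) * (((x1 t)\<^sup>2 - (y1 t)\<^sup>2) - ((x2 t)\<^sup>2 - (y2 t)\<^sup>2)))" for t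
  have du: "(u has_real_derivative u' t) (at t)" for t
    unfolding u_def u'_def using df[of t] dg[of t]
    by (auto intro!: derivative_eq_intros simp: algebra_simps power2_eq_square)
  have ub: "\<bar>u' t\<bar> \<le> 3 * u t" for t unfolding u'_def u_def by (rule lip_bound[OF bd])
  have u0: "u 0 = 0" unfolding u_def x1_def x2_def y1_def y2_def z1_def z2_def using fg0 by simp
  have unn: "u t \<ge> 0" for t unfolding u_def by simp
  have "u t = 0"
  proof (cases "t \<ge> 0")
    case True
    define v where "v t = exp (- 3 * t) * u t" for t
    have "v t \<le> v 0"
    proof (rule DERIV_nonpos_imp_nonincreasing[OF True])
      fix s
      have "(v has_real_derivative exp (- 3 * s) * (u' s - 3 * u s)) (at s)"
        unfolding v_def using du[of s] by (auto intro!: derivative_eq_intros simp: algebra_simps)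
      moreover have "exp (- 3 * s) * (u' s - 3 * u s) \<le> 0"
        using ub[of s] by (intro mult_nonneg_nonpos) auto
      ultimately show "\<exists>y. (v has_real_derivative y) (at s) \<and> y \<le> 0" by blast
    qed
    then have "exp (- 3 * t) * u t \<le> 0" unfolding v_def using u0 by simp
    then show ?thesis using unn[of t] by (simp add: mult_le_0_iff)
  next
    case False
    then have t: "t \<le> 0" by simp
    define w where "w t = exp (3 * t) * u t" for t
    have "w t \<le> w 0"
    proof (rule DERIV_nonneg_imp_nondecreasing[OF t])
      fix s
      have "(w has_real_derivative exp (3 * s) * (u' s + 3 * u s)) (at s)"
        unfolding w_def using du[of s] by (auto intro!: derivative_eq_intros simp: algebra_simps)
      moreover have "exp (3 * s) * (u' s + 3 * u s) \<ge> 0"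
        using ub[of s] by (intro mult_nonneg_nonneg) auto
      ultimately show "\<exists>y. (w has_real_derivative y) (at s) \<and> y \<ge> 0" by blast
    qed
    then have "exp (3 * t) * u t \<le> 0" unfolding w_def using u0 by simp
    then show ?thesis using unn[of t] by (simp add: mult_le_0_iff)
  qed
  then have "x1 t = x2 t" "y1 t = y2 t" "z1 t = z2 t" unfolding u_def
    by (simp_all add: add_nonneg_eq_0_iff)
  then show ?thesis unfolding x1_def x2_def y1_def y2_def z1_def z2_def by (simp add: prod_eq_iff)
qed

definition Phi :: "real \<Rightarrow> real \<Rightarrow> real" where "Phi \<alpha> = FI (bb \<alpha>) (2 * \<alpha>)"
definition rho :: "real \<Rightarrow> real \<Rightarrow> real" where "rho \<alpha> t = (THE \<phi>. Phi \<alpha> \<phi> = t)"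
definition hh :: "real \<Rightarrow> real \<Rightarrow> real" where
  "hh \<alpha> \<psi> = sqrt ((bb \<alpha>)\<^sup>2 * (cos \<psi>)\<^sup>2 + (2 * \<alpha>)\<^sup>2 * (sin \<psi>)\<^sup>2)"
definition solE :: "real \<Rightarrow> real \<Rightarrow> real \<times> real \<times> real" where
  "solE \<alpha> t = ((hh \<alpha> (rho \<alpha> t) + aa \<alpha> * cos (rho \<alpha> t)) / 2,
               (hh \<alpha> (rho \<alpha> t) - aa \<alpha> * cos (rho \<alpha> t)) / 2,
               aa \<alpha> * sin (rho \<alpha> t))"

context
  fixes \<alpha> :: real
  assumes apos: "\<alpha> > 0"
begin

lemma two_a_pos: "2 * \<alpha> > 0" using apos by simp

lemma Phi_props: "Phi \<alpha> 0 = 0" "(Phi \<alpha> has_real_derivative fI (bb \<alpha>) (2 * \<alpha>) x) (at x)"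
  unfolding Phi_def using FI_props[OF bb_pos two_a_pos] by auto

lemma Phi_strict: "x < y \<Longrightarrow> Phi \<alpha> x < Phi \<alpha> y"
  by (rule DERIV_pos_imp_increasing[of x y "Phi \<alpha>"]) (use Phi_props(2) fI_bounds(3)[OF bb_pos two_a_pos] in blast)+

lemma Phi_inj: "Phi \<alpha> x = Phi \<alpha> y \<Longrightarrow> x = y"
  using Phi_strict[of x y] Phi_strict[of y x] by (cases x y rule: linorder_cases) auto

lemma Phi_surj: "\<exists>\<phi>. Phi \<alpha> \<phi> = t"
proof -
  define M where "M = max (bb \<alpha>) (2 * \<alpha>)"
  have M: "M > 0" unfolding M_def using bb_pos[of \<alpha>] by simp
  have low: "x / M \<le> Phi \<alpha> x" if "x \<ge> 0" for x
  proof -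
    obtain \<xi> where "FI (bb \<alpha>) (2 * \<alpha>) x = x * fI (bb \<alpha>) (2 * \<alpha>) \<xi>"
      using FI_mvt[OF bb_pos two_a_pos] by blast
    moreover have "1 / M \<le> fI (bb \<alpha>) (2 * \<alpha>) \<xi>" unfolding M_def by (rule fI_bounds(1)[OF bb_pos two_a_pos])
    ultimately show ?thesis unfolding Phi_def using that mult_left_mono[of "1/M" _ x] by simp
  qed
  have up: "Phi \<alpha> x \<le> x / M" if "x \<le> 0" for x
  proof -
    obtain \<xi> where "FI (bb \<alpha>) (2 * \<alpha>) x = x * fI (bb \<alpha>) (2 * \<alpha>) \<xi>"
      using FI_mvt[OF bb_pos two_a_pos] by blast
    moreover have "1 / M \<le> fI (bb \<alpha>) (2 * \<alpha>) \<xi>" unfolding M_def by (rule fI_bounds(1)[OF bb_pos two_a_pos])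
    ultimately show ?thesis unfolding Phi_def using that mult_left_mono_neg[of "1/M" _ x] by simp
  qed
  have h1: "t \<le> Phi \<alpha> (\<bar>t\<bar> * M)" using low[of "\<bar>t\<bar> * M"] M by simp
  have h2: "Phi \<alpha> (- (\<bar>t\<bar> * M)) \<le> t" using up[of "- (\<bar>t\<bar> * M)"] M by simp
  have "\<exists>x\<ge>- (\<bar>t\<bar> * M). x \<le> \<bar>t\<bar> * M \<and> Phi \<alpha> x = t"
    by (rule IVT[of "Phi \<alpha>" "- (\<bar>t\<bar> * M)" t "\<bar>t\<bar> * M", OF h2 h1]) (use M in \<open>auto intro: DERIV_isCont[OF Phi_props(2)]\<close>)
  then show ?thesis by blast
qed

lemma rho_Phi: "rho \<alpha> (Phi \<alpha> x) = x"
  unfolding rho_def by (rule the_equality) (auto intro: Phi_inj)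

lemma Phi_rho: "Phi \<alpha> (rho \<alpha> t) = t"
proof -
  obtain \<phi> where p: "Phi \<alpha> \<phi> = t" using Phi_surj by blast
  then show ?thesis using rho_Phi[of \<phi>] by simp
qed

lemma rho0: "rho \<alpha> 0 = 0"
  using rho_Phi[of 0] Phi_props(1) by simp

lemma hh_pos: "hh \<alpha> \<psi> > 0"
  unfolding hh_def using qform_pos[OF bb_pos two_a_pos] by simp

lemma hh_fI: "hh \<alpha> \<psi> = inverse (fI (bb \<alpha>) (2 * \<alpha>) \<psi>)"
  unfolding hh_def fI_def by simp

lemma rho_deriv: "(rho \<alpha> has_real_derivative hh \<alpha> (rho \<alpha> t)) (at t)"
proof -
  have cont: "isCont (rho \<alpha>) (Phi \<alpha> (rho \<alpha> t))"
    by (rule isCont_inverse_function[where d=1]) (auto simp: rho_Phi intro: DERIV_isCont[OF Phi_props(2)])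
  have "(rho \<alpha> has_real_derivative inverse (fI (bb \<alpha>) (2 * \<alpha>) (rho \<alpha> t))) (at t)"
  proof (rule DERIV_inverse_function[where a="t - 1" and b="t + 1"])
    show "(Phi \<alpha> has_real_derivative fI (bb \<alpha>) (2 * \<alpha>) (rho \<alpha> t)) (at (rho \<alpha> t))"
      by (rule Phi_props(2))
    show "fI (bb \<alpha>) (2 * \<alpha>) (rho \<alpha> t) \<noteq> 0" using fI_bounds(3)[OF bb_pos two_a_pos] by (metis less_irrefl)
    show "isCont (rho \<alpha>) t" using cont by (simp add: Phi_rho)
  qed (auto simp: Phi_rho)
  then show ?thesis by (simp add: hh_fI)
qed

lemma hh_deriv: "(hh \<alpha> has_real_derivative ((2 * \<alpha>)\<^sup>2 - (bb \<alpha>)\<^sup>2) * sin \<psi> * cos \<psi> / hh \<alpha> \<psi>) (at \<psi>)"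
proof -
  have q: "(bb \<alpha>)\<^sup>2 * (cos \<psi>)\<^sup>2 + (2 * \<alpha>)\<^sup>2 * (sin \<psi>)\<^sup>2 > 0" by (rule qform_pos[OF bb_pos two_a_pos])
  show ?thesis unfolding hh_def using q
    by (auto intro!: derivative_eq_intros) (simp add: divide_inverse algebra_simps)
qed

lemma aa_sq: "\<alpha>\<^sup>2 < 1 / 2 \<Longrightarrow> (aa \<alpha>)\<^sup>2 = 1 - 2 * \<alpha>\<^sup>2"
  unfolding aa_def by simp

lemma aa_pos: "\<alpha>\<^sup>2 < 1 / 2 \<Longrightarrow> aa \<alpha> > 0"
  unfolding aa_def by simp

lemma hh_rho_deriv:
  assumes "\<alpha>\<^sup>2 < 1 / 2"
  shows "((\<lambda>t. hh \<alpha> (rho \<alpha> t)) has_real_derivative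
      - (aa \<alpha>)\<^sup>2 * sin (rho \<alpha> t) * cos (rho \<alpha> t)) (at t)"
proof -
  have "((\<lambda>t. hh \<alpha> (rho \<alpha> t)) has_real_derivative
      ((2 * \<alpha>)\<^sup>2 - (bb \<alpha>)\<^sup>2) * sin (rho \<alpha> t) * cos (rho \<alpha> t) / hh \<alpha> (rho \<alpha> t) * hh \<alpha> (rho \<alpha> t)) (at t)"
    by (rule DERIV_chain2[OF hh_deriv rho_deriv])
  moreover have "(2 * \<alpha>)\<^sup>2 - (bb \<alpha>)\<^sup>2 = - (aa \<alpha>)\<^sup>2"
    using aa_sq[OF assms] bb_sq[of \<alpha>] by (simp add: power_mult_distrib)
  ultimately show ?thesis using hh_pos[of "rho \<alpha> t"] by simp
qed

lemma solE_deriv: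
  assumes "\<alpha>\<^sup>2 < 1 / 2"
  shows "(solE \<alpha> has_vector_derivative vf (solE \<alpha> t)) (at t)"
proof -
  let ?r = "rho \<alpha> t"
  let ?h = "hh \<alpha> ?r"
  let ?a = "aa \<alpha>"
  note dH = hh_rho_deriv[OF assms]
  note dR = rho_deriv
  have dx: "((\<lambda>t. (hh \<alpha> (rho \<alpha> t) + ?a * cos (rho \<alpha> t)) / 2) has_real_derivative
        - ((?h + ?a * cos ?r) / 2) * (?a * sin ?r)) (at t)"
    by (rule derivative_eq_intros dH dR refl | simp)+ (simp add: algebra_simps power2_eq_square)
  have dy: "((\<lambda>t. (hh \<alpha> (rho \<alpha> t) - ?a * cos (rho \<alpha> t)) / 2) has_real_derivative
        ((?h - ?a * cos ?r) / 2) * (?a * sin ?r)) (at t)"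
    by (rule derivative_eq_intros dH dR refl | simp)+ (simp add: algebra_simps power2_eq_square)
  have dz: "((\<lambda>t. ?a * sin (rho \<alpha> t)) has_real_derivative
        ((?h + ?a * cos ?r) / 2)\<^sup>2 - ((?h - ?a * cos ?r) / 2)\<^sup>2) (at t)"
    by (rule derivative_eq_intros dH dR refl | simp)+ (simp add: field_simps power2_eq_square)
  have "((\<lambda>t. ((hh \<alpha> (rho \<alpha> t) + ?a * cos (rho \<alpha> t)) / 2,
               (hh \<alpha> (rho \<alpha> t) - ?a * cos (rho \<alpha> t)) / 2,
               ?a * sin (rho \<alpha> t))) has_vector_derivative
        (- ((?h + ?a * cos ?r) / 2) * (?a * sin ?r),
         ((?h - ?a * cos ?r) / 2) * (?a * sin ?r),
         ((?h + ?a * cos ?r) / 2)\<^sup>2 - ((?h - ?a * cos ?r) / 2)\<^sup>2)) (at t)"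
    using dx dy dz unfolding has_real_derivative_iff_has_vector_derivative
    by (intro has_vector_derivative_Pair)
  then show ?thesis unfolding solE_def vf_def by (simp add: fun_eq_iff)
qed

lemma solE0: "solE \<alpha> 0 = ((bb \<alpha> + aa \<alpha>) / 2, (bb \<alpha> - aa \<alpha>) / 2, 0)"
proof -
  have "hh \<alpha> 0 = bb \<alpha>" unfolding hh_def using bb_pos[of \<alpha>] by simp
  then show ?thesis unfolding solE_def rho0 by simp
qed

end

lemma ab_facts:
  assumes "0 < \<alpha>" "\<alpha> < 1 / 2"
  shows "\<alpha>\<^sup>2 < 1 / 2" "aa \<alpha> > 0" "bb \<alpha> > aa \<alpha>"
    "(aa \<alpha>)\<^sup>2 = 1 - 2 * \<alpha>\<^sup>2" "(bb \<alpha>)\<^sup>2 = 1 + 2 * \<alpha>\<^sup>2"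
proof -
  have "\<alpha> * \<alpha> < (1/2) * (1/2)" using assms by (intro mult_strict_mono) auto
  then show a2: "\<alpha>\<^sup>2 < 1 / 2" by (simp add: power2_eq_square)
  show "aa \<alpha> > 0" using aa_pos[OF assms(1) a2] .
  show sa: "(aa \<alpha>)\<^sup>2 = 1 - 2 * \<alpha>\<^sup>2" using aa_sq[OF assms(1) a2] .
  show sb: "(bb \<alpha>)\<^sup>2 = 1 + 2 * \<alpha>\<^sup>2" by (rule bb_sq)
  have "(aa \<alpha>)\<^sup>2 < (bb \<alpha>)\<^sup>2" using sa sb assms by simp
  then show "bb \<alpha> > aa \<alpha>" using bb_pos[of \<alpha>] by (meson abs_le_square_iff less_le_not_le power2_less_imp_less)
qed

lemma init_xy_eq:
  assumes L: "L > L0"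
  shows "init_xy L = ((bb (alpha_of L) + aa (alpha_of L)) / 2, (bb (alpha_of L) - aa (alpha_of L)) / 2)"
proof -
  define \<alpha> where "\<alpha> = alpha_of L"
  note p = alpha_of_props[OF L, folded \<alpha>_def]
  note f = ab_facts[OF p(1,2)]
  define a where "a = aa \<alpha>"
  define b where "b = bb \<alpha>"
  have a: "a > 0" "a\<^sup>2 = 1 - 2 * \<alpha>\<^sup>2" and b: "b > a" "b\<^sup>2 = 1 + 2 * \<alpha>\<^sup>2"
    using f unfolding a_def b_def by auto
  show ?thesis unfolding init_xy_def \<alpha>_def[symmetric] a_def[symmetric] b_def[symmetric]
  proof (rule the_equality, goal_cases)
    case 1
    have "((b + a) / 2)\<^sup>2 + ((b - a) / 2)\<^sup>2 = 1" using a b by (simp add: power2_eq_square field_simps)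
    moreover have "(b + a) / 2 * ((b - a) / 2) = \<alpha>\<^sup>2" using a b by (simp add: power2_eq_square field_simps)
    ultimately show ?case using a b by simp
  next
    case (2 p)
    then have h: "fst p > snd p \<and> snd p > 0 \<and> (fst p)\<^sup>2 + (snd p)\<^sup>2 = 1 \<and> fst p * snd p = \<alpha>\<^sup>2" by simp
    obtain x y where pxy: "p = (x, y)" by (cases p)
    have h': "x > y" "y > 0" "x\<^sup>2 + y\<^sup>2 = 1" "x * y = \<alpha>\<^sup>2" using h pxy by auto
    have "(x + y)\<^sup>2 = b\<^sup>2" using h' b by (simp add: power2_eq_square algebra_simps)
    moreover have "x + y \<ge> 0" "b \<ge> 0" using h' a b by auto
    ultimately have s: "x + y = b" using power2_eq_iff_nonneg by blast
    have "(x - y)\<^sup>2 = a\<^sup>2" using h' a by (simp add: power2_eq_square algebra_simps)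
    moreover have "x - y \<ge> 0" "a \<ge> 0" using h' a by auto
    ultimately have d: "x - y = a" using power2_eq_iff_nonneg by blast
    show ?case using s d pxy by auto
  qed
qed

lemma sol_eq:
  assumes L: "L > L0"
  shows "sol L = solE (alpha_of L)"
proof -
  define \<alpha> where "\<alpha> = alpha_of L"
  note p = alpha_of_props[OF L, folded \<alpha>_def]
  note f = ab_facts[OF p(1,2)]
  have init: "(fst (init_xy L), snd (init_xy L), 0) = solE \<alpha> 0"
    using init_xy_eq[OF L] solE0[OF p(1)] unfolding \<alpha>_def by simp
  have dE: "\<And>t. (solE \<alpha> has_vector_derivative vf (solE \<alpha> t)) (at t)"
    by (rule solE_deriv[OF p(1) f(1)])
  have n0: "(fst (solE \<alpha> 0))\<^sup>2 + (fst (snd (solE \<alpha> 0)))\<^sup>2 + (snd (snd (solE \<alpha> 0)))\<^sup>2 = 1"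
    unfolding solE0[OF p(1)] using f by (simp add: power2_eq_square field_simps)
  show ?thesis unfolding sol_def \<alpha>_def[symmetric]
  proof (rule the_equality)
    show "solE \<alpha> 0 = (fst (init_xy L), snd (init_xy L), 0) \<and>
        (\<forall>t. (solE \<alpha> has_vector_derivative vf (solE \<alpha> t)) (at t))"
      using init dE by simp
  next
    fix g assume g: "g 0 = (fst (init_xy L), snd (init_xy L), 0) \<and>
        (\<forall>t. (g has_vector_derivative vf (g t)) (at t))"
    show "g = solE \<alpha>"
    proof
      fix t
      show "g t = solE \<alpha> t"
        by (rule ode_unique[where f=g and g="solE \<alpha>"]) (use g init dE n0 in auto)
    qed
  qed
qed

lemma zL_eq:
  assumes L: "L > L0"
  shows "zL L t = aa (alpha_of L) * sin (rho (alpha_of L) t)"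
  unfolding zL_def sol_eq[OF L] solE_def by simp

lemma rho_shift:
  assumes "\<alpha> > 0"
  shows "rho \<alpha> (t + Lfun \<alpha> / 2) = rho \<alpha> t + pi"
proof -
  have "Phi \<alpha> (rho \<alpha> t + pi) = Phi \<alpha> (rho \<alpha> t) + Phi \<alpha> pi"
    unfolding Phi_def by (rule FI_shift[OF bb_pos]) (use assms in simp)
  also have "Phi \<alpha> pi = Lfun \<alpha> / 2"
    unfolding Phi_def Lfun_def using FI_half[OF bb_pos, of "2 * \<alpha>"] assms by simp
  finally have "Phi \<alpha> (rho \<alpha> t + pi) = t + Lfun \<alpha> / 2" using Phi_rho[OF assms] by simp
  then show ?thesis using rho_Phi[OF assms, of "rho \<alpha> t + pi"] by simp
qed

lemma rho_quot:
  assumes a: "0 < \<alpha>" "\<alpha> < 1 / 2" and s: "s \<noteq> 0"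
  shows "rho \<alpha> s \<noteq> 0" "\<bar>rho \<alpha> s\<bar> \<le> 2 * \<bar>s\<bar>"
    "\<bar>rho \<alpha> s / s - bb \<alpha>\<bar> \<le> (rho \<alpha> s)\<^sup>2"
proof -
  define r where "r = rho \<alpha> s"
  note f = ab_facts[OF a]
  have sr: "Phi \<alpha> r = s" unfolding r_def by (rule Phi_rho[OF a(1)])
  have ap: "2 * \<alpha> > 0" using a by simp
  obtain \<xi> where xi: "Phi \<alpha> r = r * fI (bb \<alpha>) (2 * \<alpha>) \<xi>" "\<bar>\<xi>\<bar> \<le> \<bar>r\<bar>"
    using FI_mvt[OF bb_pos[of \<alpha>] ap, of r] unfolding Phi_def by blast
  show r0: "rho \<alpha> s \<noteq> 0" using sr s Phi_props(1)[OF a(1)] unfolding r_def by auto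
  have bb2: "bb \<alpha> \<le> 2"
  proof -
    have "(bb \<alpha>)\<^sup>2 \<le> 2\<^sup>2" using f by simp
    then show ?thesis using bb_pos[of \<alpha>] by (meson power2_le_imp_le zero_le_numeral)
  qed
  have "1 / 2 \<le> 1 / max (bb \<alpha>) (2 * \<alpha>)" using bb2 a bb_pos[of \<alpha>] by (simp add: divide_simps)
  also have "\<dots> \<le> fI (bb \<alpha>) (2 * \<alpha>) \<xi>" by (rule fI_bounds(1)[OF bb_pos[of \<alpha>] ap])
  finally have fl: "1 / 2 \<le> fI (bb \<alpha>) (2 * \<alpha>) \<xi>" .
  have "\<bar>s\<bar> = \<bar>r\<bar> * fI (bb \<alpha>) (2 * \<alpha>) \<xi>"
  proof -
    have "s = r * fI (bb \<alpha>) (2 * \<alpha>) \<xi>" using sr xi by simp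
    then show ?thesis using fI_bounds(3)[OF bb_pos[of \<alpha>] ap, of \<xi>] by (simp add: abs_mult)
  qed
  also have "\<dots> \<ge> \<bar>r\<bar> * (1 / 2)" using fl by (intro mult_left_mono) auto
  finally show "\<bar>rho \<alpha> s\<bar> \<le> 2 * \<bar>s\<bar>" unfolding r_def[symmetric] by simp
  have "r / s = hh \<alpha> \<xi>"
  proof -
    have e: "s = r * fI (bb \<alpha>) (2 * \<alpha>) \<xi>" using sr xi by simp
    have "r \<noteq> 0" using r0 unfolding r_def .
    then show ?thesis unfolding e hh_fI[OF a(1)] using fI_bounds(3)[OF bb_pos[of \<alpha>] ap, of \<xi>]
      by (simp add: divide_simps)
  qed
  moreover have "\<bar>hh \<alpha> \<xi> - bb \<alpha>\<bar> \<le> r\<^sup>2"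
  proof -
    have h2: "(hh \<alpha> \<xi>)\<^sup>2 = (bb \<alpha>)\<^sup>2 - (aa \<alpha>)\<^sup>2 * (sin \<xi>)\<^sup>2"
    proof -
      have "(hh \<alpha> \<xi>)\<^sup>2 = (bb \<alpha>)\<^sup>2 * (cos \<xi>)\<^sup>2 + (2 * \<alpha>)\<^sup>2 * (sin \<xi>)\<^sup>2"
        unfolding hh_def using qform_pos[OF bb_pos[of \<alpha>] ap, of \<xi>] by simp
      then show ?thesis unfolding cos_squared_eq f(4) f(5) by (simp add: algebra_simps power_mult_distrib)
    qed
    have "(aa \<alpha>)\<^sup>2 * (sin \<xi>)\<^sup>2 \<le> 1 * \<xi>\<^sup>2"
    proof (rule mult_mono)
      show "(aa \<alpha>)\<^sup>2 \<le> 1" using f by simp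
      show "(sin \<xi>)\<^sup>2 \<le> \<xi>\<^sup>2" using abs_sin_x_le_abs_x[of \<xi>] by (metis abs_ge_zero power2_abs power_mono)
    qed auto
    also have "\<xi>\<^sup>2 \<le> r\<^sup>2" using xi(2) by (metis abs_ge_zero power2_abs power_mono)
    finally have d: "\<bar>(hh \<alpha> \<xi>)\<^sup>2 - (bb \<alpha>)\<^sup>2\<bar> \<le> r\<^sup>2" unfolding h2 by simp
    have "(hh \<alpha> \<xi>)\<^sup>2 - (bb \<alpha>)\<^sup>2 = (hh \<alpha> \<xi> - bb \<alpha>) * (hh \<alpha> \<xi> + bb \<alpha>)"
      by (simp add: power2_eq_square algebra_simps)
    then have "\<bar>hh \<alpha> \<xi> - bb \<alpha>\<bar> * (hh \<alpha> \<xi> + bb \<alpha>) \<le> r\<^sup>2"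
      using d hh_pos[OF a(1), of \<xi>] bb_pos[of \<alpha>] by (simp add: abs_mult)
    moreover have "\<bar>hh \<alpha> \<xi> - bb \<alpha>\<bar> \<le> \<bar>hh \<alpha> \<xi> - bb \<alpha>\<bar> * (hh \<alpha> \<xi> + bb \<alpha>)"
      using hh_pos[OF a(1), of \<xi>] bb_ge1[of \<alpha>] by (simp add: mult_le_cancel_left1)
    ultimately show ?thesis by linarith
  qed
  ultimately show "\<bar>rho \<alpha> s / s - bb \<alpha>\<bar> \<le> (rho \<alpha> s)\<^sup>2" unfolding r_def by simp
qed

lemma sinc_lim: "((\<lambda>x::real. sin x / x) \<longlongrightarrow> 1) (at 0)"
proof -
  have "((\<lambda>y::real. (sin y - sin 0) / (y - 0)) \<longlongrightarrow> cos 0) (at 0)"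
    using DERIV_sin[of "0::real"] unfolding has_field_derivative_iff .
  then show ?thesis by simp
qed

lemma G_deriv:
  assumes L: "L > L0" and c: "c > 0"
  shows "((\<lambda>L'. aa (alpha_of L') * sin (rho (alpha_of L') (c * (L - L')))) has_real_derivative
      - c * aa (alpha_of L) * bb (alpha_of L)) (at L)"
proof -
  define \<alpha> where "\<alpha> = alpha_of L"
  define r where "r L' = rho (alpha_of L') (c * (L - L'))" for L'
  define G where "G L' = aa (alpha_of L') * sin (r L')" for L'
  have G0: "G L = 0" unfolding G_def r_def using rho0[OF alpha_of_props(1)[OF L]] by simp
  have evL0: "\<forall>\<^sub>F L' in at L. L' > L0"
    using L by (intro order_tendstoD(1)[OF tendsto_ident_at])
  have evne: "\<forall>\<^sub>F L' in at L. L' \<noteq> L" by (simp add: eventually_at_filter)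
  have ev: "\<forall>\<^sub>F L' in at L. L' > L0 \<and> L' \<noteq> L" using evL0 evne by eventually_elim auto
  have props: "r L' \<noteq> 0 \<and> \<bar>r L'\<bar> \<le> 2 * \<bar>c * (L - L')\<bar> \<and>
      \<bar>r L' / (c * (L - L')) - bb (alpha_of L')\<bar> \<le> (r L')\<^sup>2" if "L' > L0" "L' \<noteq> L" for L'
  proof -
    have s: "c * (L - L') \<noteq> 0" using c that by simp
    note q = rho_quot[OF alpha_of_props(1,2)[OF that(1)] s]
    show ?thesis using q unfolding r_def by auto
  qed
  have T1: "((\<lambda>L'. aa (alpha_of L')) \<longlongrightarrow> aa \<alpha>) (at L)"
    unfolding \<alpha>_def by (rule isCont_tendsto_compose[OF _ alpha_of_cont[OF L]]) (unfold aa_def, intro continuous_intros)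
  have T2: "((\<lambda>L'. bb (alpha_of L')) \<longlongrightarrow> bb \<alpha>) (at L)"
    unfolding \<alpha>_def by (rule isCont_tendsto_compose[OF _ alpha_of_cont[OF L]]) (unfold bb_def, intro continuous_intros)
  have T3: "(r \<longlongrightarrow> 0) (at L)"
  proof -
    have "((\<lambda>L'. 2 * \<bar>c * (L - L')\<bar>) \<longlongrightarrow> 2 * \<bar>c * (L - L)\<bar>) (at L)"
      by (intro tendsto_intros)
    then have l: "((\<lambda>L'. 2 * \<bar>c * (L - L')\<bar>) \<longlongrightarrow> 0) (at L)" by simp
    have "\<forall>\<^sub>F L' in at L. norm (r L') \<le> 2 * \<bar>c * (L - L')\<bar>"
      using ev by eventually_elim (use props in auto)
    from Lim_null_comparison[OF this l] show ?thesis .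
  qed
  have T4: "((\<lambda>L'. sin (r L') / r L') \<longlongrightarrow> 1) (at L)"
  proof -
    have "filterlim r (at 0) (at L)"
      by (rule filterlim_atI[OF T3]) (use ev in \<open>eventually_elim, use props in auto\<close>)
    from filterlim_compose[OF sinc_lim this] show ?thesis .
  qed
  have T5: "((\<lambda>L'. r L' / (c * (L - L'))) \<longlongrightarrow> bb \<alpha>) (at L)"
  proof -
    have "((\<lambda>L'. (r L')\<^sup>2) \<longlongrightarrow> 0\<^sup>2) (at L)" by (intro tendsto_intros T3)
    then have l: "((\<lambda>L'. (r L')\<^sup>2) \<longlongrightarrow> 0) (at L)" by simp
    have "\<forall>\<^sub>F L' in at L. norm (r L' / (c * (L - L')) - bb (alpha_of L')) \<le> (r L')\<^sup>2"
      using ev by eventually_elim (use props in auto)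
    from Lim_null_comparison[OF this l]
    have "((\<lambda>L'. r L' / (c * (L - L')) - bb (alpha_of L')) \<longlongrightarrow> 0) (at L)" .
    from tendsto_add[OF this T2] show ?thesis by simp
  qed
  have lim: "((\<lambda>L'. - c * aa (alpha_of L') * (sin (r L') / r L') * (r L' / (c * (L - L'))))
      \<longlongrightarrow> - c * aa \<alpha> * 1 * bb \<alpha>) (at L)"
    by (intro tendsto_intros T1 T4 T5)
  have eq: "\<forall>\<^sub>F L' in at L. - c * aa (alpha_of L') * (sin (r L') / r L') * (r L' / (c * (L - L')))
      = (G L' - G L) / (L' - L)"
    using ev
  proof eventually_elim
    case (elim L')
    then have "r L' \<noteq> 0" "L - L' \<noteq> 0" using props by auto
    then show ?case using c by (simp add: G0 G_def[of L'] field_simps)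
  qed
  have "((\<lambda>L'. (G L' - G L) / (L' - L)) \<longlongrightarrow> - c * aa \<alpha> * bb \<alpha>) (at L)"
    using Lim_transform_eventually[OF lim eq] by simp
  then show ?thesis unfolding has_field_derivative_iff G_def r_def \<alpha>_def by simp
qed

lemma ev_L0: "L > L0 \<Longrightarrow> \<forall>\<^sub>F L' in nhds L. L' > L0"
  using eventually_nhds_in_open[of "{L0<..}" L] by simp

lemma D1:
  assumes L: "L > L0"
  shows "((\<lambda>L'. zL L' L) has_real_derivative - aa (alpha_of L) * bb (alpha_of L)) (at L)"
proof -
  have "\<forall>\<^sub>F L' in nhds L. zL L' L = aa (alpha_of L') * sin (rho (alpha_of L') (1 * (L - L')))"
    using ev_L0[OF L]
  proof eventually_elim
    case (elim L')
    note p = alpha_of_props[OF elim]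
    define a where "a = alpha_of L'"
    have pa: "a > 0" using p(1) unfolding a_def .
    have e: "((L - L') + Lfun a / 2) + Lfun a / 2 = L" using p(3) unfolding a_def by simp
    have s1: "rho a (((L - L') + Lfun a / 2) + Lfun a / 2) = rho a ((L - L') + Lfun a / 2) + pi"
      by (rule rho_shift[OF pa])
    have s2: "rho a ((L - L') + Lfun a / 2) = rho a (L - L') + pi" by (rule rho_shift[OF pa])
    have "rho a L = rho a (L - L') + 2 * pi" using s1 s2 unfolding e by simp
    then show ?case unfolding zL_eq[OF elim] a_def[symmetric] by (simp add: sin_periodic)
  qed
  then show ?thesis using G_deriv[OF L, of 1] by (subst DERIV_cong_ev) auto
qed

lemma D2:
  assumes L: "L > L0"
  shows "((\<lambda>L'. zL L' (L / 2)) has_real_derivative aa (alpha_of L) * bb (alpha_of L) / 2) (at L)"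
proof -
  have "\<forall>\<^sub>F L' in nhds L. zL L' (L / 2) = - (aa (alpha_of L') * sin (rho (alpha_of L') ((1/2) * (L - L'))))"
    using ev_L0[OF L]
  proof eventually_elim
    case (elim L')
    note p = alpha_of_props[OF elim]
    define a where "a = alpha_of L'"
    have pa: "a > 0" using p(1) unfolding a_def .
    have e: "(1/2) * (L - L') + Lfun a / 2 = L / 2" using p(3) unfolding a_def by (simp add: field_simps)
    have s1: "rho a ((1/2) * (L - L') + Lfun a / 2) = rho a ((1/2) * (L - L')) + pi"
      by (rule rho_shift[OF pa])
    have "rho a (L / 2) = rho a ((1/2) * (L - L')) + pi" using s1 unfolding e .
    then show ?case unfolding zL_eq[OF elim] a_def[symmetric] by (simp add: sin_periodic_pi)
  qed
  moreover have "((\<lambda>L'. - (aa (alpha_of L') * sin (rho (alpha_of L') ((1/2) * (L - L')))))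
      has_real_derivative - (- (1/2) * aa (alpha_of L) * bb (alpha_of L))) (at L)"
    using G_deriv[OF L, of "1/2"] by (intro DERIV_minus) auto
  ultimately show ?thesis by (subst DERIV_cong_ev) auto
qed

lemma ab_lim: "((\<lambda>L. aa (alpha_of L) * bb (alpha_of L)) \<longlongrightarrow> 1) at_top"
proof -
  have "isCont (\<lambda>\<alpha>. aa \<alpha> * bb \<alpha>) 0" unfolding aa_def bb_def by (intro continuous_intros)
  from isCont_tendsto_compose[OF this alpha_of_tendsto] show ?thesis by (simp add: aa_def bb_def)
qed

theorem lemma8p6:
  shows "(\<forall>\<^sub>F L in at_top. (\<lambda>L'. zL L' L) differentiable (at L)
                          \<and> (\<lambda>L'. zL L' (L / 2)) differentiable (at L))
      \<and> ((\<lambda>L. deriv (\<lambda>L'. zL L' L) L) \<longlongrightarrow> -1) at_top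
      \<and> ((\<lambda>L. deriv (\<lambda>L'. zL L' (L / 2)) L) \<longlongrightarrow> 1 / 2) at_top"
proof (intro conjI)
  have ev: "\<forall>\<^sub>F L in at_top. L > L0" by (rule eventually_gt_at_top)
  show "\<forall>\<^sub>F L in at_top. (\<lambda>L'. zL L' L) differentiable (at L)
                          \<and> (\<lambda>L'. zL L' (L / 2)) differentiable (at L)"
    using ev
  proof eventually_elim
    case (elim L)
    show ?case using D1[OF elim] D2[OF elim] unfolding has_field_derivative_def
      by (auto intro: differentiableI)
  qed
  have "((\<lambda>L. - (aa (alpha_of L) * bb (alpha_of L))) \<longlongrightarrow> - 1) at_top"
    by (intro tendsto_intros ab_lim)
  moreover have "\<forall>\<^sub>F L in at_top. - (aa (alpha_of L) * bb (alpha_of L)) = deriv (\<lambda>L'. zL L' L) L"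
    using ev by eventually_elim (use D1 DERIV_imp_deriv in fastforce)
  ultimately show "((\<lambda>L. deriv (\<lambda>L'. zL L' L) L) \<longlongrightarrow> -1) at_top"
    by (rule Lim_transform_eventually)
  have "((\<lambda>L. aa (alpha_of L) * bb (alpha_of L) / 2) \<longlongrightarrow> 1 / 2) at_top"
    by (intro tendsto_intros ab_lim) auto
  moreover have "\<forall>\<^sub>F L in at_top. aa (alpha_of L) * bb (alpha_of L) / 2 = deriv (\<lambda>L'. zL L' (L / 2)) L"
    using ev by eventually_elim (use D2 DERIV_imp_deriv in fastforce)
  ultimately show "((\<lambda>L. deriv (\<lambda>L'. zL L' (L / 2)) L) \<longlongrightarrow> 1 / 2) at_top"
    by (rule Lim_transform_eventually)
qed

end
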